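(* Let $(\Xi,\mathcal{F},P)$ be a probability space and $\{y_t\}_{t\in\mathbb{Z}}$ a real, mean-zero, covariance-stationary series on it; put $\mathcal{F}_t=\sigma(y_s,\,s\le t)$. Assume (D1) $P\{y_1^2>0\}=1$; (D2) $y_t=\sum_{s=0}^{\infty}\kappa_s\epsilon_{t-s}$ with $\kappa_0=1$, $\sum_s|\kappa_s|<\infty$, $\kappa(z)=\sum_s\kappa_s z^s\neq 0$ for $|z|\le 1$, where $\{\epsilon_t\}$ is a martingale difference sequence with respect to $\{\mathcal{F}_t\}$; (D3) $E[\epsilon_t^2\mid\mathcal{F}_{t-1}]=\sigma_\epsilon^2$ a.s. (constant); (D4) $\sup_t|\epsilon_t|\le K<\infty$ a.s. Fix $\beta\in[0,1]$, let $\theta_t$ be generated by the recursive algorithm in the context, and assume there are random variables $k^*$ (integer, $0\le k^*<\infty$) and $K^*\in(0,1)$ such that a.s. $|\theta_{t+k^*}|\le K^*$ for all $t\ge1$. Then for each integer $u\ge0$, $$\frac1t\sum_{s=1}^t\Big(\sum_{j=0}^u\kappa_j^\phi(s)\epsilon_{s-j}\Big)^2=\frac{\sigma_\epsilon^2}{t}\sum_{s=1}^t\sum_{j=0}^u\big(\kappa_j^\phi(s)\big)^2+o_{a.s.}(1).$$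
   Context: Recursive algorithm: set $\theta_1=0$, $\bar P_1=0$, $e_1=y_1$, $x_1=y_1$, $\phi_1=x_1$, and for $t\ge2$: $x_t=y_t-\beta\theta_{t-1}x_{t-1}$; $e_t=y_t-\theta_{t-1}e_{t-1}$; $\phi_t=x_t-\theta_{t-1}\phi_{t-1}$; $\bar P_t=\frac1t\sum_{s=1}^{t-1}\phi_s^2$; $\theta_t=\theta_{t-1}+\bar P_t^{-1}\frac1t\phi_{t-1}e_t$. Coefficients: for $t\ge1$, $j\ge0$ (empty products equal 1), $\kappa_j^x(t)=\sum_{l=0}^{\min(j,t-1)}(-\beta)^l\kappa_{j-l}\prod_{i=1}^l\theta_{t-i}$; $\kappa_j^\phi(1)=\kappa_j$ and $\kappa_j^\phi(t)=\kappa_j^x(t)-\theta_{t-1}\kappa_{j-1}^\phi(t-1)$ for $t\ge2$, with $\kappa_{-1}^\phi(\cdot):=0$; these are the coefficients in $\phi_t=\sum_{j\ge0}\kappa_j^\phi(t)\epsilon_{t-j}$. The notation $o_{a.s.}(1)$ denotes a term converging to $0$ almost surely as $t\to\infty$. *)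

theory Defs
  imports "HOL-Probability.Probability"
begin

definition nat_filtration :: "'a measure \<Rightarrow> (int \<Rightarrow> 'a \<Rightarrow> real) \<Rightarrow> int \<Rightarrow> 'a measure" where
  "nat_filtration M y t =
     sigma (space M) {y s -` A \<inter> space M | s A. s \<le> t \<and> A \<in> sets borel}"

text \<open>State of the recursive algorithm at time t (t >= 1), for a fixed sample path Y (Y t = y_t):
  (theta_t, x_t, e_t, phi_t, S_t) where S_t = sum_{s=1}^t phi_s^2, so that
  Pbar_t = S_{t-1} / t.  Index 0 is a dummy value and never used.\<close>
fun rls_state :: "real \<Rightarrow> (nat \<Rightarrow> real) \<Rightarrow> nat \<Rightarrow> real \<times> real \<times> real \<times> real \<times> real" where
  "rls_state \<beta> Y 0 = (0, 0, 0, 0, 0)"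
| "rls_state \<beta> Y (Suc 0) = (0, Y 1, Y 1, Y 1, (Y 1)\<^sup>2)"
| "rls_state \<beta> Y (Suc (Suc n)) =
     (let t = Suc (Suc n);
          (\<theta>p, xp, ep, \<phi>p, Sp) = rls_state \<beta> Y (Suc n);
          x = Y t - \<beta> * \<theta>p * xp;
          e = Y t - \<theta>p * ep;
          \<phi> = x - \<theta>p * \<phi>p;
          Pbar = (1 / real t) * Sp;
          \<theta> = \<theta>p + inverse Pbar * (1 / real t) * \<phi>p * e
      in (\<theta>, x, e, \<phi>, Sp + \<phi>\<^sup>2))"

definition rls_theta :: "real \<Rightarrow> (nat \<Rightarrow> real) \<Rightarrow> nat \<Rightarrow> real" where
  "rls_theta \<beta> Y t = fst (rls_state \<beta> Y t)"

definition kappa_x :: "real \<Rightarrow> (nat \<Rightarrow> real) \<Rightarrow> (nat \<Rightarrow> real) \<Rightarrow> nat \<Rightarrow> nat \<Rightarrow> real" where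
  "kappa_x \<beta> \<kappa> th t j =
     (\<Sum>l = 0..min j (t - 1). (-\<beta>) ^ l * \<kappa> (j - l) * (\<Prod>i = 1..l. th (t - i)))"

text \<open>kappa^phi_j(t) for t >= 1 (with kappa^phi_{-1} = 0); index t = 0 is a dummy.\<close>
fun kappa_phi :: "real \<Rightarrow> (nat \<Rightarrow> real) \<Rightarrow> (nat \<Rightarrow> real) \<Rightarrow> nat \<Rightarrow> nat \<Rightarrow> real" where
  "kappa_phi \<beta> \<kappa> th 0 j = 0"
| "kappa_phi \<beta> \<kappa> th (Suc 0) j = \<kappa> j"
| "kappa_phi \<beta> \<kappa> th (Suc (Suc n)) 0 = kappa_x \<beta> \<kappa> th (Suc (Suc n)) 0"
| "kappa_phi \<beta> \<kappa> th (Suc (Suc n)) (Suc j) =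
     kappa_x \<beta> \<kappa> th (Suc (Suc n)) (Suc j) - th (Suc n) * kappa_phi \<beta> \<kappa> th (Suc n) j"

end

theory Submission
  imports Defs
begin


lemma pw_bd: "\<bar>a::real\<bar> \<le> C \<Longrightarrow> \<bar>a^n\<bar> \<le> C^n"
  by (simp add: power_abs power_mono)

lemma slln_core:
  fixes M :: "'a measure" and Fn :: "nat \<Rightarrow> 'a measure" and D :: "nat \<Rightarrow> 'a \<Rightarrow> real" and B :: real
  assumes P: "prob_space M"
  and sub: "\<And>n. subalgebra M (Fn n)"
  and mono: "\<And>n m. n \<le> m \<Longrightarrow> sets (Fn n) \<subseteq> sets (Fn m)"
  and Dm: "\<And>n. D n \<in> borel_measurable (Fn n)"
  and Db: "\<And>n x. x \<in> space M \<Longrightarrow> \<bar>D n x\<bar> \<le> B"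
  and orth: "\<And>n Z C. Z \<in> borel_measurable (Fn n) \<Longrightarrow> (\<And>x. x \<in> space M \<Longrightarrow> \<bar>Z x\<bar> \<le> C)
              \<Longrightarrow> (\<integral>x. Z x * D (Suc n) x \<partial>M) = 0"
  shows "AE x in M. (\<lambda>t. (1/real t) * (\<Sum>s=1..t. D s x)) \<longlonglongrightarrow> 0"
proof -
  interpret prob_space M by (rule P)
  have spF: "space (Fn n) = space M" for n using sub[of n] by (simp add: subalgebra_def)
  have B0: "0 \<le> B" using Db[of _ 0] abs_ge_zero order_trans
    by (metis ex_in_conv not_empty)
  define S where "S t x = (\<Sum>s=1..t. D s x)" for t x
  have subFF: "subalgebra (Fn m) (Fn n)" if "n \<le> m" for n m
    using mono[OF that] by (simp add: subalgebra_def spF)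
  have DmF: "D s \<in> borel_measurable (Fn t)" if "s \<le> t" for s t
    using measurable_from_subalg[OF subFF[OF that] Dm] .
  have DmM[measurable]: "D s \<in> borel_measurable M" for s
    using measurable_from_subalg[OF sub Dm] .
  have Sm: "S t \<in> borel_measurable (Fn t)" for t
    unfolding S_def by (intro borel_measurable_sum DmF) auto
  have SmM[measurable]: "S t \<in> borel_measurable M" for t
    using measurable_from_subalg[OF sub Sm] .
  have Sb: "\<bar>S t x\<bar> \<le> real t * B" if "x \<in> space M" for t x
  proof -
    have "\<bar>S t x\<bar> \<le> (\<Sum>s=1..t. \<bar>D s x\<bar>)" unfolding S_def by (rule sum_abs)
    also have "\<dots> \<le> (\<Sum>s=1..t. B)" by (intro sum_mono Db that)
    finally show ?thesis by simp
  qed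
  have SSuc: "S (Suc t) x = S t x + D (Suc t) x" for t x unfolding S_def by simp
  have intb: "integrable M f" if "f \<in> borel_measurable M" "\<And>x. x \<in> space M \<Longrightarrow> \<bar>f x\<bar> \<le> C" for f and C :: real
    using that by (intro integrable_const_bound[where B=C]) auto
  have o1: "(\<integral>x. S t x * D (Suc t) x \<partial>M) = 0" for t
    by (rule orth[OF Sm Sb])
  have o3: "(\<integral>x. (S t x)^3 * D (Suc t) x \<partial>M) = 0" for t
  proof (rule orth)
    show "(\<lambda>x. (S t x)^3) \<in> borel_measurable (Fn t)" using Sm by measurable
    show "\<bar>(S t x)^3\<bar> \<le> (real t * B)^3" if "x \<in> space M" for x
      unfolding power_abs by (intro power_mono Sb that) auto
  qed
  have E2: "(\<integral>x. (S t x)^2 \<partial>M) \<le> real t * B^2" for t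
  proof (induction t)
    case 0 then show ?case by (simp add: S_def)
  next
    case (Suc t)
    have i1: "integrable M (\<lambda>x. (S t x)^2)"
      by (rule intb[of _ "(real t * B)^2"], measurable, intro pw_bd Sb, assumption)
    have i2: "integrable M (\<lambda>x. S t x * D (Suc t) x)"
      by (rule intb[of _ "(real t * B) * B"]) (auto simp: abs_mult B0 intro!: mult_mono Sb Db)
    have i3: "integrable M (\<lambda>x. (D (Suc t) x)^2)"
      by (rule intb[of _ "B^2"], measurable, intro pw_bd Db, assumption)
    have "(\<integral>x. (S (Suc t) x)^2 \<partial>M) = (\<integral>x. (S t x)^2 + 2 * (S t x * D (Suc t) x) + (D (Suc t) x)^2 \<partial>M)"
      by (simp add: SSuc power2_eq_square algebra_simps)
    also have "\<dots> = (\<integral>x. (S t x)^2 \<partial>M) + 2 * (\<integral>x. S t x * D (Suc t) x \<partial>M) + (\<integral>x. (D (Suc t) x)^2 \<partial>M)"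
      using i1 i2 i3 by simp
    also have "(\<integral>x. (D (Suc t) x)^2 \<partial>M) \<le> (\<integral>x. B^2 \<partial>M)"
      using i3 by (intro integral_mono) (auto simp: abs_le_square_iff[symmetric] intro!: Db order_trans[OF _ abs_ge_self] simp add: B0 abs_of_nonneg[OF B0] )
    finally show ?case using Suc.IH o1[of t] by (simp add: algebra_simps prob_space)
  qed
  have E4: "(\<integral>x. (S t x)^4 \<partial>M) \<le> 11 * B^4 * (real t)^2" for t
  proof (induction t)
    case 0 then show ?case by (simp add: S_def)
  next
    case (Suc t)
    have i1: "integrable M (\<lambda>x. (S t x)^4)"
      by (rule intb[of _ "(real t * B)^4"], measurable, intro pw_bd Sb, assumption)
    have i2: "integrable M (\<lambda>x. (S t x)^3 * D (Suc t) x)"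
      by (rule intb[of _ "(real t * B)^3 * B"]) (auto simp: abs_mult B0 intro!: mult_mono pw_bd Sb Db)
    have i3: "integrable M (\<lambda>x. (S t x)^2)"
      by (rule intb[of _ "(real t * B)^2"], measurable, intro pw_bd Sb, assumption)
    have i4: "integrable M (\<lambda>x. (S (Suc t) x)^4)"
      by (rule intb[of _ "(real (Suc t) * B)^4"], measurable, intro pw_bd Sb, assumption)
    have pw: "(S (Suc t) x)^4 \<le> (S t x)^4 + 4 * ((S t x)^3 * D (Suc t) x) + 8 * B^2 * (S t x)^2 + 3 * B^4"
      if x: "x \<in> space M" for x
    proof -
      define a where "a = S t x" define d where "d = D (Suc t) x"
      have db: "\<bar>d\<bar> \<le> B" unfolding d_def by (rule Db[OF x])
      have d2: "d^2 \<le> B^2" using pw_bd[OF db, of 2] by simp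
      have d4: "d^4 \<le> B^4" using pw_bd[OF db, of 4] by simp
      have h0: "a^2 * d^2 \<le> a^2 * B^2" using d2 by (intro mult_left_mono) auto
      have h1: "6 * a^2 * d^2 \<le> 6 * B^2 * a^2" using h0 by (simp add: mult.commute)
      have h2: "4 * a * d^3 \<le> 2 * a^2 * d^2 + 2 * d^4"
      proof -
        have "0 \<le> 2 * d^2 * (a - d)^2" by simp
        then show ?thesis by (simp add: power2_eq_square power3_eq_cube power4_eq_xxxx algebra_simps)
      qed
      have h3: "2 * a^2 * d^2 \<le> 2 * B^2 * a^2" using h0 by (simp add: mult.commute)
      have "(S (Suc t) x)^4 = a^4 + 4 * (a^3 * d) + 6 * a^2 * d^2 + 4 * a * d^3 + d^4"
        unfolding SSuc a_def d_def by (simp add: power2_eq_square power3_eq_cube power4_eq_xxxx algebra_simps)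
      then show ?thesis using h1 h2 h3 d4 unfolding a_def[symmetric] d_def[symmetric] by linarith
    qed
    have "(\<integral>x. (S (Suc t) x)^4 \<partial>M) \<le> (\<integral>x. (S t x)^4 + 4 * ((S t x)^3 * D (Suc t) x) + 8 * B^2 * (S t x)^2 + 3 * B^4 \<partial>M)"
      using i1 i2 i3 i4 pw by (intro integral_mono) auto
    also have "\<dots> = (\<integral>x. (S t x)^4 \<partial>M) + 4 * (\<integral>x. (S t x)^3 * D (Suc t) x \<partial>M) + 8 * B^2 * (\<integral>x. (S t x)^2 \<partial>M) + 3 * B^4"
      using i1 i2 i3 by (simp add: prob_space)
    also have "\<dots> \<le> 11 * B^4 * (real t)^2 + 0 + 8 * B^2 * (real t * B^2) + 3 * B^4"
      using Suc.IH o3[of t] E2[of t] B0 by (intro add_mono mult_left_mono) auto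
    also have "\<dots> \<le> 11 * B^4 * (real (Suc t))^2"
    proof -
      have "0 \<le> B^4" using B0 by simp
      then have "B^4 * (8 * real t + 3) \<le> B^4 * (22 * real t + 11)" by (intro mult_left_mono) auto
      then show ?thesis by (simp add: power2_eq_square algebra_simps power4_eq_xxxx)
    qed
    finally show ?case .
  qed
  have BC: "AE x in M. eventually (\<lambda>n. \<bar>S (Suc n) x\<bar> < \<delta> * real (Suc n)) sequentially"
    if dpos: "0 < \<delta>" for \<delta> :: real
  proof -
    define A where "A n = {x \<in> space M. (\<delta> * real (Suc n))^4 \<le> (S (Suc n) x)^4}" for n
    have Am[measurable]: "A n \<in> sets M" for n unfolding A_def by measurable
    have i4: "integrable M (\<lambda>x. (S n x)^4)" for n
      by (rule intb[of _ "(real n * B)^4"], measurable, intro pw_bd Sb, assumption)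
    have mA: "measure M (A n) \<le> (11 * B^4 / \<delta>^4) * inverse (real (Suc n) ^ 2)" for n
    proof -
      have cpos: "0 < (\<delta> * real (Suc n))^4" using dpos by simp
      have "measure M (A n) \<le> (\<integral>x. (S (Suc n) x)^4 \<partial>M) / (\<delta> * real (Suc n))^4"
        unfolding A_def by (rule integral_Markov_inequality_measure[OF i4 _ _ cpos]) (auto simp: sets.top)
      also have "\<dots> \<le> (11 * B^4 * (real (Suc n))^2) / (\<delta> * real (Suc n))^4"
        using E4[of "Suc n"] cpos by (intro divide_right_mono) auto
      also have "\<dots> = (11 * B^4 / \<delta>^4) * inverse (real (Suc n) ^ 2)"
      proof -
        have g: "11 * B^4 * rr^2 / (\<delta> * rr)^4 = (11 * B^4 / \<delta>^4) * inverse (rr ^ 2)" if "rr > 0" for rr :: real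
          using that dpos by (simp add: field_simps power_mult_distrib power2_eq_square power4_eq_xxxx)
        show ?thesis by (rule g) simp
      qed
      finally show ?thesis .
    qed
    have sI: "summable (\<lambda>n. inverse (real (Suc n) ^ 2))"
      using summable_ignore_initial_segment[OF inverse_power_summable[of 2, where 'a=real], of 1] by simp
    have "summable (\<lambda>n. measure M (A n))"
      by (rule summable_comparison_test[OF _ summable_mult[OF sI, of "11 * B^4 / \<delta>^4"]]) (use mA in auto)
    then have "AE x in M. eventually (\<lambda>n. x \<in> space M - A n) sequentially"
      by (intro borel_cantelli_AE1) (auto simp: emeasure_eq_measure)
    then show ?thesis
    proof (rule AE_mp, intro AE_I2 impI)
      fix x assume x: "x \<in> space M" and ev: "eventually (\<lambda>n. x \<in> space M - A n) sequentially"
      show "eventually (\<lambda>n. \<bar>S (Suc n) x\<bar> < \<delta> * real (Suc n)) sequentially"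
      proof (rule eventually_mono[OF ev])
        fix n assume "x \<in> space M - A n"
        then have "(\<bar>S (Suc n) x\<bar>)^4 < (\<delta> * real (Suc n))^4" using x by (auto simp: A_def)
        then show "\<bar>S (Suc n) x\<bar> < \<delta> * real (Suc n)"
          by (rule power_less_imp_less_base) (use dpos in simp)
      qed
    qed
  qed
  have "\<forall>m. AE x in M. eventually (\<lambda>n. \<bar>S (Suc n) x\<bar> < inverse (real (Suc m)) * real (Suc n)) sequentially"
    by (intro allI BC) simp
  then have "AE x in M. \<forall>m. eventually (\<lambda>n. \<bar>S (Suc n) x\<bar> < inverse (real (Suc m)) * real (Suc n)) sequentially"
    by (simp add: AE_all_countable)
  then show ?thesis
  proof (rule AE_mp, intro AE_I2 impI)
    fix x assume H: "\<forall>m. eventually (\<lambda>n. \<bar>S (Suc n) x\<bar> < inverse (real (Suc m)) * real (Suc n)) sequentially"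
    have "(\<lambda>n. (1 / real (Suc n)) * S (Suc n) x) \<longlonglongrightarrow> 0"
    proof (rule LIMSEQ_I)
      fix r :: real assume r: "0 < r"
      obtain m where m: "inverse (real (Suc m)) < r" using reals_Archimedean[OF r] by auto
      from H[rule_format, of m] obtain N where N: "\<And>n. n \<ge> N \<Longrightarrow> \<bar>S (Suc n) x\<bar> < inverse (real (Suc m)) * real (Suc n)"
        by (auto simp: eventually_sequentially)
      show "\<exists>no. \<forall>n\<ge>no. norm ((1 / real (Suc n)) * S (Suc n) x - 0) < r"
      proof (intro exI allI impI)
        fix n assume "n \<ge> N"
        from N[OF this] have "\<bar>S (Suc n) x\<bar> / real (Suc n) < inverse (real (Suc m))"
          by (simp add: divide_less_eq)
        then show "norm ((1 / real (Suc n)) * S (Suc n) x - 0) < r" using m by simp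
      qed
    qed
    then show "(\<lambda>t. (1/real t) * (\<Sum>s=1..t. D s x)) \<longlonglongrightarrow> 0"
      unfolding S_def by (rule LIMSEQ_imp_Suc)
  qed
qed



lemma cesaro_null:
  fixes q :: "nat \<Rightarrow> real"
  assumes "q \<longlonglongrightarrow> 0"
  shows "(\<lambda>t. (1 / real t) * (\<Sum>s=1..t. q s)) \<longlonglongrightarrow> 0"
proof (rule LIMSEQ_I)
  fix r :: real assume r: "0 < r"
  from LIMSEQ_D[OF assms, of "r/2"] r obtain N where N: "\<And>n. n \<ge> N \<Longrightarrow> \<bar>q n\<bar> < r/2" by auto
  define P where "P = (\<Sum>s=1..N. \<bar>q s\<bar>)"
  have P0: "0 \<le> P" unfolding P_def by (intro sum_nonneg) auto
  obtain N2 :: nat where N2: "2 * P / r < real N2" using reals_Archimedean2 by blast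
  show "\<exists>no. \<forall>n\<ge>no. norm ((1 / real n) * (\<Sum>s=1..n. q s) - 0) < r"
  proof (intro exI[of _ "Suc (max N N2)"] allI impI)
    fix n assume n: "Suc (max N N2) \<le> n"
    then have nN: "N \<le> n" and npos: "0 < real n" and nN2: "real N2 < real n" by auto
    have split: "{1..n} = {1..N} \<union> {Suc N..n}" using nN by auto
    have "\<bar>\<Sum>s=1..n. q s\<bar> \<le> (\<Sum>s=1..n. \<bar>q s\<bar>)" by (rule sum_abs)
    also have "\<dots> = P + (\<Sum>s=Suc N..n. \<bar>q s\<bar>)"
      unfolding P_def split by (subst sum.union_disjoint) auto
    also have "(\<Sum>s=Suc N..n. \<bar>q s\<bar>) \<le> (\<Sum>s=Suc N..n. r/2)"
      by (intro sum_mono less_imp_le N) auto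
    also have "\<dots> \<le> real n * (r/2)" using r by (simp add: mult_right_mono)
    finally have A: "\<bar>\<Sum>s=1..n. q s\<bar> \<le> P + real n * (r/2)" by simp
    have rr: "r * real N2 < r * real n" using nN2 r by simp
    have "2 * P < r * real N2" using N2 r by (simp add: field_simps)
    then have "P < real n * (r/2)" using rr by (simp add: mult.commute)
    with A have "\<bar>\<Sum>s=1..n. q s\<bar> < real n * r" by simp
    then show "norm ((1 / real n) * (\<Sum>s=1..n. q s) - 0) < r"
      using npos by (simp add: abs_mult field_simps)
  qed
qed

lemma rec_bounded:
  fixes v w c :: "nat \<Rightarrow> real"
  assumes rec: "\<And>n. n \<ge> n0 \<Longrightarrow> v (Suc n) = w (Suc n) - c n * v n"
    and wb: "\<And>n. n \<ge> n0 \<Longrightarrow> \<bar>w (Suc n)\<bar> \<le> W" and cb: "\<And>n. n \<ge> n0 \<Longrightarrow> \<bar>c n\<bar> \<le> k" and k: "k < 1"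
  shows "\<exists>B. \<forall>n\<ge>n0. \<bar>v n\<bar> \<le> B"
proof -
  define B where "B = max \<bar>v n0\<bar> (W / (1 - k))"
  have k0: "0 \<le> k" using cb[of n0] by simp
  have "\<bar>v n\<bar> \<le> B" if "n \<ge> n0" for n
    using that
  proof (induction n rule: dec_induct)
    case base then show ?case by (simp add: B_def)
  next
    case (step n)
    have "\<bar>v (Suc n)\<bar> \<le> \<bar>w (Suc n)\<bar> + \<bar>c n\<bar> * \<bar>v n\<bar>"
      using rec[OF step(1)] by (simp add: abs_mult[symmetric] abs_triangle_ineq4)
    also have "\<dots> \<le> W + k * B"
      using wb[OF step(1)] cb[OF step(1)] step(3) k0 by (intro add_mono mult_mono) auto
    also have "\<dots> \<le> B"
    proof -
      have "W / (1 - k) \<le> B" by (simp add: B_def)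
      then have "W \<le> B * (1 - k)" using k by (simp add: divide_le_eq)
      then show ?thesis by (simp add: algebra_simps)
    qed
    finally show ?case .
  qed
  then show ?thesis by blast
qed

definition "rls_x \<beta> Y t = fst (snd (rls_state \<beta> Y t))"
definition "rls_e \<beta> Y t = fst (snd (snd (rls_state \<beta> Y t)))"
definition "rls_phi \<beta> Y t = fst (snd (snd (snd (rls_state \<beta> Y t))))"
definition "rls_S \<beta> Y t = snd (snd (snd (snd (rls_state \<beta> Y t))))"

lemma rls_state_eq: "rls_state \<beta> Y t = (rls_theta \<beta> Y t, rls_x \<beta> Y t, rls_e \<beta> Y t, rls_phi \<beta> Y t, rls_S \<beta> Y t)"
  by (simp add: rls_theta_def rls_x_def rls_e_def rls_phi_def rls_S_def)

lemma rls_1: "rls_theta \<beta> Y 1 = 0" "rls_x \<beta> Y 1 = Y 1" "rls_e \<beta> Y 1 = Y 1" "rls_phi \<beta> Y 1 = Y 1"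
  "rls_S \<beta> Y 1 = (Y 1)\<^sup>2" "rls_theta \<beta> Y 0 = 0"
  by (simp_all add: rls_theta_def rls_x_def rls_e_def rls_phi_def rls_S_def)

lemma rls_SS:
  fixes n :: nat
  defines "t \<equiv> Suc (Suc n)"
  shows
  "rls_x \<beta> Y t = Y t - \<beta> * rls_theta \<beta> Y (Suc n) * rls_x \<beta> Y (Suc n)"
  "rls_e \<beta> Y t = Y t - rls_theta \<beta> Y (Suc n) * rls_e \<beta> Y (Suc n)"
  "rls_phi \<beta> Y t = rls_x \<beta> Y t - rls_theta \<beta> Y (Suc n) * rls_phi \<beta> Y (Suc n)"
  "rls_S \<beta> Y t = rls_S \<beta> Y (Suc n) + (rls_phi \<beta> Y t)\<^sup>2"
  "rls_theta \<beta> Y t = rls_theta \<beta> Y (Suc n) + inverse ((1 / real t) * rls_S \<beta> Y (Suc n)) * (1 / real t) * rls_phi \<beta> Y (Suc n) * rls_e \<beta> Y t"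
  unfolding t_def
  by (simp_all add: rls_x_def rls_e_def rls_phi_def rls_S_def rls_theta_def Let_def split: prod.split)

lemma dtheta_null:
  fixes Y :: "nat \<Rightarrow> real"
  assumes Yb: "\<And>n. \<bar>Y n\<bar> \<le> W" and Y1: "Y 1 \<noteq> 0"
    and thb: "\<And>n. n \<ge> n0 \<Longrightarrow> \<bar>rls_theta \<beta> Y n\<bar> \<le> k" and k: "k < 1"
    and \<beta>: "0 \<le> \<beta>" "\<beta> \<le> 1" and n0: "n0 \<ge> 1"
  shows "(\<lambda>n. rls_theta \<beta> Y (Suc n) - rls_theta \<beta> Y n) \<longlonglongrightarrow> 0"
proof -
  define th where "th = rls_theta \<beta> Y"
  define x where "x = rls_x \<beta> Y"
  define e where "e = rls_e \<beta> Y"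
  define ph where "ph = rls_phi \<beta> Y"
  define S where "S = rls_S \<beta> Y"
  have Sinc: "S (Suc (Suc m)) = S (Suc m) + (ph (Suc (Suc m)))^2" for m
    unfolding S_def ph_def by (rule rls_SS(4))
  have S1: "S 1 = (Y 1)^2" unfolding S_def by (simp add: rls_S_def)
  have S1pos: "0 < S 1" using Y1 S1 by simp
  have Sge: "S 1 \<le> S (Suc m)" for m
  proof (induction m)
    case 0 then show ?case by simp
  next
    case (Suc m) then show ?case using Sinc[of m] by (simp add: add_increasing2)
  qed
  have incS: "incseq (\<lambda>m. S (Suc m))"
    by (rule incseq_SucI) (simp add: Sinc)
  have dth: "th (Suc (Suc m)) - th (Suc m) = ph (Suc m) * e (Suc (Suc m)) / S (Suc m)" for m
    unfolding th_def ph_def e_def S_def by (simp add: rls_SS(5) field_simps del: of_nat_Suc)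
  have ks: "\<bar>\<beta> * th n\<bar> \<le> k" if "n \<ge> n0" for n
  proof -
    have "\<bar>\<beta> * th n\<bar> \<le> 1 * \<bar>th n\<bar>" unfolding abs_mult using \<beta> by (intro mult_right_mono) auto
    then show ?thesis using thb[OF that] unfolding th_def by simp
  qed
  have n0S: "n \<ge> n0 \<Longrightarrow> \<exists>m. n = Suc m" for n using n0 by (cases n) auto
  obtain E where Eb: "\<And>n. n \<ge> n0 \<Longrightarrow> \<bar>e n\<bar> \<le> E"
  proof -
    have "\<exists>B. \<forall>n\<ge>n0. \<bar>e n\<bar> \<le> B"
    proof (rule rec_bounded[where w=Y and c=th and W=W and k=k])
      fix n assume "n \<ge> n0" then obtain m where "n = Suc m" using n0S by blast
      then show "e (Suc n) = Y (Suc n) - th n * e n" unfolding e_def th_def by (simp add: rls_SS(2))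
    qed (use Yb thb k in \<open>auto simp: th_def\<close>)
    then show ?thesis using that by blast
  qed
  obtain X where Xb: "\<And>n. n \<ge> n0 \<Longrightarrow> \<bar>x n\<bar> \<le> X"
  proof -
    have "\<exists>B. \<forall>n\<ge>n0. \<bar>x n\<bar> \<le> B"
    proof (rule rec_bounded[where w=Y and c="\<lambda>n. \<beta> * th n" and W=W and k=k])
      fix n assume "n \<ge> n0" then obtain m where "n = Suc m" using n0S by blast
      then show "x (Suc n) = Y (Suc n) - \<beta> * th n * x n" unfolding x_def th_def by (simp add: rls_SS(1))
    qed (use Yb ks k in auto)
    then show ?thesis using that by blast
  qed
  obtain P where Pb: "\<And>n. n \<ge> n0 \<Longrightarrow> \<bar>ph n\<bar> \<le> P"
  proof -
    have "\<exists>B. \<forall>n\<ge>n0. \<bar>ph n\<bar> \<le> B"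
    proof (rule rec_bounded[where w=x and c=th and W=X and k=k])
      fix n assume "n \<ge> n0" then obtain m where "n = Suc m" using n0S by blast
      then show "ph (Suc n) = x (Suc n) - th n * ph n" unfolding x_def th_def ph_def by (simp add: rls_SS(3))
    qed (use Xb thb k in \<open>auto simp: th_def\<close>)
    then show ?thesis using that by blast
  qed
  have E0: "0 \<le> E" using Eb[of n0] by simp
  have "(\<lambda>m. th (Suc (Suc m)) - th (Suc m)) \<longlonglongrightarrow> 0"
  proof (cases "bdd_above (range (\<lambda>m. S (Suc m)))")
    case True
    have conv: "(\<lambda>m. S (Suc m)) \<longlonglongrightarrow> (SUP m. S (Suc m))"
      by (rule LIMSEQ_incseq_SUP[OF True incS])
    have "(\<lambda>m. S (Suc (Suc m)) - S (Suc m)) \<longlonglongrightarrow> (SUP m. S (Suc m)) - (SUP m. S (Suc m))"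
      by (intro tendsto_diff LIMSEQ_Suc conv)
    then have "(\<lambda>m. (ph (Suc (Suc m)))^2) \<longlonglongrightarrow> 0" by (simp add: Sinc)
    then have "(\<lambda>m. sqrt ((ph (Suc (Suc m)))^2)) \<longlonglongrightarrow> sqrt 0" by (rule tendsto_real_sqrt)
    then have "(\<lambda>m. \<bar>ph (Suc (Suc m))\<bar>) \<longlonglongrightarrow> 0" by simp
    then have "(\<lambda>m. \<bar>ph (Suc m)\<bar>) \<longlonglongrightarrow> 0" by (rule LIMSEQ_imp_Suc)
    then have lim: "(\<lambda>m. \<bar>ph (Suc m)\<bar> * E / S 1) \<longlonglongrightarrow> 0"
      using tendsto_mult_left_zero tendsto_divide_zero by blast
    show ?thesis
    proof (rule Lim_null_comparison[OF _ lim])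
      show "\<forall>\<^sub>F m in sequentially. norm (th (Suc (Suc m)) - th (Suc m)) \<le> \<bar>ph (Suc m)\<bar> * E / S 1"
      proof (rule eventually_sequentiallyI[of n0])
        fix m assume m: "n0 \<le> m"
        have "norm (th (Suc (Suc m)) - th (Suc m)) = \<bar>ph (Suc m)\<bar> * \<bar>e (Suc (Suc m))\<bar> / S (Suc m)"
          using dth[of m] Sge[of m] S1pos by (simp add: abs_mult)
        also have "\<dots> \<le> \<bar>ph (Suc m)\<bar> * E / S (Suc m)"
          using Eb[of "Suc (Suc m)"] m Sge[of m] S1pos
          by (intro divide_right_mono mult_left_mono) auto
        also have "\<dots> \<le> \<bar>ph (Suc m)\<bar> * E / S 1"
          using Sge[of m] S1pos E0 by (intro divide_left_mono) auto
        finally show "norm (th (Suc (Suc m)) - th (Suc m)) \<le> \<bar>ph (Suc m)\<bar> * E / S 1" .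
      qed
    qed
  next
    case False
    have top: "filterlim (\<lambda>m. S (Suc m)) at_top sequentially"
    proof (subst filterlim_at_top, intro allI)
      fix Z :: real
      from False obtain m0 where "S (Suc m0) > Z" by (auto simp: bdd_above_def not_le)
      then show "\<forall>\<^sub>F m in sequentially. Z \<le> S (Suc m)"
        using incS by (intro eventually_sequentiallyI[of m0]) (auto dest: monoD[of _ m0] intro: order_trans[OF less_imp_le])
    qed
    have lim: "(\<lambda>m. (P * E) / S (Suc m)) \<longlonglongrightarrow> 0"
      by (rule tendsto_divide_0[OF tendsto_const filterlim_at_top_imp_at_infinity[OF top]])
    show ?thesis
    proof (rule Lim_null_comparison[OF _ lim])
      show "\<forall>\<^sub>F m in sequentially. norm (th (Suc (Suc m)) - th (Suc m)) \<le> (P * E) / S (Suc m)"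
      proof (rule eventually_sequentiallyI[of n0])
        fix m assume m: "n0 \<le> m"
        have "norm (th (Suc (Suc m)) - th (Suc m)) = \<bar>ph (Suc m)\<bar> * \<bar>e (Suc (Suc m))\<bar> / S (Suc m)"
          using dth[of m] Sge[of m] S1pos by (simp add: abs_mult)
        also have "\<dots> \<le> (P * E) / S (Suc m)"
          using Eb[of "Suc (Suc m)"] Pb[of "Suc m"] m Sge[of m] S1pos
          by (intro divide_right_mono mult_mono) auto
        finally show "norm (th (Suc (Suc m)) - th (Suc m)) \<le> (P * E) / S (Suc m)" .
      qed
    qed
  qed
  then show ?thesis unfolding th_def by (rule LIMSEQ_imp_Suc)
qed



lemma prod_diff_bound:
  fixes a b :: "nat \<Rightarrow> real"
  assumes "finite I" "\<And>i. i \<in> I \<Longrightarrow> \<bar>a i\<bar> \<le> 1 \<and> \<bar>b i\<bar> \<le> 1 \<and> \<bar>a i - b i\<bar> \<le> d"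
  shows "\<bar>prod a I - prod b I\<bar> \<le> real (card I) * d \<and> \<bar>prod a I\<bar> \<le> 1"
  using assms
proof (induction I rule: finite_induct)
  case empty then show ?case by simp
next
  case (insert x F)
  then have IH: "\<bar>prod a F - prod b F\<bar> \<le> real (card F) * d" "\<bar>prod a F\<bar> \<le> 1" by auto
  have bF: "\<bar>prod b F\<bar> \<le> 1"
    using insert by (simp add: abs_prod prod_le_1)
  have hx: "\<bar>a x\<bar> \<le> 1" "\<bar>b x\<bar> \<le> 1" "\<bar>a x - b x\<bar> \<le> d" using insert by auto
  have "prod a (insert x F) - prod b (insert x F) = a x * (prod a F - prod b F) + (a x - b x) * prod b F"
    using insert by (simp add: algebra_simps)
  then have "\<bar>prod a (insert x F) - prod b (insert x F)\<bar> \<le> \<bar>a x\<bar> * \<bar>prod a F - prod b F\<bar> + \<bar>a x - b x\<bar> * \<bar>prod b F\<bar>"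
    by (simp add: abs_mult[symmetric] abs_triangle_ineq)
  also have "\<dots> \<le> 1 * (real (card F) * d) + d * 1"
    using hx IH bF by (intro add_mono mult_mono) auto
  finally have 1: "\<bar>prod a (insert x F) - prod b (insert x F)\<bar> \<le> real (card (insert x F)) * d"
    using insert by (simp add: algebra_simps)
  have "\<bar>prod a (insert x F)\<bar> \<le> 1" using insert hx IH by (simp add: abs_mult mult_le_one)
  with 1 show ?case by blast
qed

definition "Kb (\<kappa>::nat \<Rightarrow> real) j = (\<Sum>l=0..j. \<bar>\<kappa> (j - l)\<bar>)"

lemma kx_lip:
  assumes \<beta>: "0 \<le> \<beta>" "\<beta> \<le> 1" and d: "0 \<le> d"
    and W: "\<And>r. 1 \<le> r \<Longrightarrow> r < t \<Longrightarrow> t \<le> r + j \<Longrightarrow> \<bar>th r\<bar> \<le> 1 \<and> \<bar>th' r\<bar> \<le> 1 \<and> \<bar>th r - th' r\<bar> \<le> d"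
  shows "\<bar>kappa_x \<beta> \<kappa> th t j\<bar> \<le> Kb \<kappa> j \<and> \<bar>kappa_x \<beta> \<kappa> th t j - kappa_x \<beta> \<kappa> th' t j\<bar> \<le> Kb \<kappa> j * (real j * d)"
proof -
  have P: "\<bar>(\<Prod>i = 1..l. th (t - i)) - (\<Prod>i = 1..l. th' (t - i))\<bar> \<le> real l * d \<and> \<bar>\<Prod>i = 1..l. th (t - i)\<bar> \<le> 1"
    if l: "l \<in> {0..min j (t - 1)}" for l
  proof -
    have "\<bar>(\<Prod>i = 1..l. th (t - i)) - (\<Prod>i = 1..l. th' (t - i))\<bar> \<le> real (card {1..l}) * d \<and> \<bar>\<Prod>i = 1..l. th (t - i)\<bar> \<le> 1"
    proof (rule prod_diff_bound)
      fix i assume i: "i \<in> {1..l}"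
      show "\<bar>th (t - i)\<bar> \<le> 1 \<and> \<bar>th' (t - i)\<bar> \<le> 1 \<and> \<bar>th (t - i) - th' (t - i)\<bar> \<le> d"
        using i l by (intro W) auto
    qed simp
    then show ?thesis by simp
  qed
  have bpow: "\<bar>(-\<beta>)^l\<bar> \<le> 1" for l :: nat using \<beta> by (simp add: power_abs power_le_one)
  have sub: "{0..min j (t - 1)} \<subseteq> {0..j}" by auto
  have "\<bar>kappa_x \<beta> \<kappa> th t j\<bar> \<le> (\<Sum>l=0..min j (t - 1). \<bar>(-\<beta>) ^ l * \<kappa> (j - l) * (\<Prod>i = 1..l. th (t - i))\<bar>)"
    unfolding kappa_x_def by (rule sum_abs)
  also have "\<dots> \<le> (\<Sum>l=0..min j (t - 1). \<bar>\<kappa> (j - l)\<bar>)"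
  proof (rule sum_mono)
    fix l assume l: "l \<in> {0..min j (t - 1)}"
    have "\<bar>(-\<beta>) ^ l * \<kappa> (j - l) * (\<Prod>i = 1..l. th (t - i))\<bar> \<le> 1 * \<bar>\<kappa> (j - l)\<bar> * 1"
      unfolding abs_mult using bpow[of l] P[OF l] by (intro mult_mono) auto
    then show "\<bar>(-\<beta>) ^ l * \<kappa> (j - l) * (\<Prod>i = 1..l. th (t - i))\<bar> \<le> \<bar>\<kappa> (j - l)\<bar>" by simp
  qed
  also have "\<dots> \<le> Kb \<kappa> j" unfolding Kb_def by (rule sum_mono2[OF _ sub]) auto
  finally have 1: "\<bar>kappa_x \<beta> \<kappa> th t j\<bar> \<le> Kb \<kappa> j" .
  have "\<bar>kappa_x \<beta> \<kappa> th t j - kappa_x \<beta> \<kappa> th' t j\<bar> =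
      \<bar>\<Sum>l=0..min j (t - 1). (-\<beta>) ^ l * \<kappa> (j - l) * ((\<Prod>i = 1..l. th (t - i)) - (\<Prod>i = 1..l. th' (t - i)))\<bar>"
    unfolding kappa_x_def by (simp add: sum_subtractf[symmetric] algebra_simps)
  also have "\<dots> \<le> (\<Sum>l=0..min j (t - 1). \<bar>(-\<beta>) ^ l * \<kappa> (j - l) * ((\<Prod>i = 1..l. th (t - i)) - (\<Prod>i = 1..l. th' (t - i)))\<bar>)"
    by (rule sum_abs)
  also have "\<dots> \<le> (\<Sum>l=0..min j (t - 1). \<bar>\<kappa> (j - l)\<bar> * (real j * d))"
  proof (rule sum_mono)
    fix l assume l: "l \<in> {0..min j (t - 1)}"
    have "real l * d \<le> real j * d" using l d by (intro mult_right_mono) auto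
    then have "\<bar>(-\<beta>) ^ l * \<kappa> (j - l) * ((\<Prod>i = 1..l. th (t - i)) - (\<Prod>i = 1..l. th' (t - i)))\<bar> \<le> 1 * \<bar>\<kappa> (j - l)\<bar> * (real j * d)"
      unfolding abs_mult using bpow[of l] P[OF l] by (intro mult_mono) auto
    then show "\<bar>(-\<beta>) ^ l * \<kappa> (j - l) * ((\<Prod>i = 1..l. th (t - i)) - (\<Prod>i = 1..l. th' (t - i)))\<bar> \<le> \<bar>\<kappa> (j - l)\<bar> * (real j * d)" by simp
  qed
  also have "\<dots> = (\<Sum>l=0..min j (t - 1). \<bar>\<kappa> (j - l)\<bar>) * (real j * d)" by (simp add: sum_distrib_right)
  also have "\<dots> \<le> Kb \<kappa> j * (real j * d)"
    unfolding Kb_def using d by (intro mult_right_mono sum_mono2[OF _ sub]) auto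
  finally show ?thesis using 1 by blast
qed

lemma kp_lip:
  assumes \<beta>: "0 \<le> \<beta>" "\<beta> \<le> 1"
  shows "\<exists>B C. \<forall>t th th' d. 0 \<le> d \<longrightarrow>
    (\<forall>r. 1 \<le> r \<longrightarrow> r < t \<longrightarrow> t \<le> r + j \<longrightarrow> \<bar>th r\<bar> \<le> 1 \<and> \<bar>th' r\<bar> \<le> 1 \<and> \<bar>th r - th' r\<bar> \<le> d) \<longrightarrow>
    \<bar>kappa_phi \<beta> \<kappa> th t j\<bar> \<le> B \<and> \<bar>kappa_phi \<beta> \<kappa> th t j - kappa_phi \<beta> \<kappa> th' t j\<bar> \<le> C * d"
proof (induction j)
  case 0
  show ?case
  proof (rule exI[of _ "\<bar>\<kappa> 0\<bar> + Kb \<kappa> 0"], rule exI[of _ 0], intro allI impI)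
    fix t :: nat and th th' :: "nat \<Rightarrow> real" and d :: real assume d: "0 \<le> d" and W: "\<forall>r. 1 \<le> r \<longrightarrow> r < t \<longrightarrow> t \<le> r + 0 \<longrightarrow> \<bar>th r\<bar> \<le> 1 \<and> \<bar>th' r\<bar> \<le> 1 \<and> \<bar>th r - th' r\<bar> \<le> d"
    show "\<bar>kappa_phi \<beta> \<kappa> th t 0\<bar> \<le> \<bar>\<kappa> 0\<bar> + Kb \<kappa> 0 \<and> \<bar>kappa_phi \<beta> \<kappa> th t 0 - kappa_phi \<beta> \<kappa> th' t 0\<bar> \<le> 0 * d"
    proof (cases t)
      case 0 then show ?thesis by (simp add: Kb_def)
    next
      case (Suc n) note n = this
      show ?thesis
      proof (cases n)
        case 0 then show ?thesis using n by (simp add: Kb_def)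
      next
        case (Suc m)
        then show ?thesis using n by (simp add: kappa_x_def Kb_def)
      qed
    qed
  qed
next
  case (Suc j)
  from Suc.IH obtain B C where BC: "\<And>t th th' d. 0 \<le> d \<Longrightarrow>
    (\<forall>r. 1 \<le> r \<longrightarrow> r < t \<longrightarrow> t \<le> r + j \<longrightarrow> \<bar>th r\<bar> \<le> 1 \<and> \<bar>th' r\<bar> \<le> 1 \<and> \<bar>th r - th' r\<bar> \<le> d) \<Longrightarrow>
    \<bar>kappa_phi \<beta> \<kappa> th t j\<bar> \<le> B \<and> \<bar>kappa_phi \<beta> \<kappa> th t j - kappa_phi \<beta> \<kappa> th' t j\<bar> \<le> C * d"
    by blast
  have B0: "0 \<le> B" using BC[of 0 0 "\<lambda>_. 0" "\<lambda>_. 0"] by auto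
  have C0: "0 \<le> C" using BC[of 1 0 "\<lambda>_. 0" "\<lambda>_. 0"] by auto
  show ?case
  proof (rule exI[of _ "\<bar>\<kappa> (Suc j)\<bar> + Kb \<kappa> (Suc j) + B"], rule exI[of _ "Kb \<kappa> (Suc j) * real (Suc j) + C + B"], intro allI impI)
    fix t :: nat and th th' :: "nat \<Rightarrow> real" and d :: real assume d: "0 \<le> d" and W: "\<forall>r. 1 \<le> r \<longrightarrow> r < t \<longrightarrow> t \<le> r + Suc j \<longrightarrow> \<bar>th r\<bar> \<le> 1 \<and> \<bar>th' r\<bar> \<le> 1 \<and> \<bar>th r - th' r\<bar> \<le> d"
    have Kb0: "0 \<le> Kb \<kappa> (Suc j)" unfolding Kb_def by (intro sum_nonneg) auto
    show "\<bar>kappa_phi \<beta> \<kappa> th t (Suc j)\<bar> \<le> \<bar>\<kappa> (Suc j)\<bar> + Kb \<kappa> (Suc j) + B \<and>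
       \<bar>kappa_phi \<beta> \<kappa> th t (Suc j) - kappa_phi \<beta> \<kappa> th' t (Suc j)\<bar> \<le> (Kb \<kappa> (Suc j) * real (Suc j) + C + B) * d"
    proof (cases t)
      case 0 then show ?thesis using Kb0 B0 C0 d by simp
    next
      case (Suc n) note n = this
      show ?thesis
      proof (cases n)
        case 0 then show ?thesis using n Kb0 B0 C0 d by simp
      next
        case (Suc m)
        have t: "t = Suc (Suc m)" using n Suc by simp
        have Wx: "\<And>r. 1 \<le> r \<Longrightarrow> r < t \<Longrightarrow> t \<le> r + Suc j \<Longrightarrow> \<bar>th r\<bar> \<le> 1 \<and> \<bar>th' r\<bar> \<le> 1 \<and> \<bar>th r - th' r\<bar> \<le> d"
          using W by blast
        have KX: "\<bar>kappa_x \<beta> \<kappa> th t (Suc j)\<bar> \<le> Kb \<kappa> (Suc j) \<and>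
            \<bar>kappa_x \<beta> \<kappa> th t (Suc j) - kappa_x \<beta> \<kappa> th' t (Suc j)\<bar> \<le> Kb \<kappa> (Suc j) * (real (Suc j) * d)"
          by (rule kx_lip[OF \<beta> d]) (rule Wx)
        have Wp: "\<forall>r. 1 \<le> r \<longrightarrow> r < Suc m \<longrightarrow> Suc m \<le> r + j \<longrightarrow> \<bar>th r\<bar> \<le> 1 \<and> \<bar>th' r\<bar> \<le> 1 \<and> \<bar>th r - th' r\<bar> \<le> d"
          using W t by auto
        have Wp': "\<forall>r. 1 \<le> r \<longrightarrow> r < Suc m \<longrightarrow> Suc m \<le> r + j \<longrightarrow> \<bar>th' r\<bar> \<le> 1 \<and> \<bar>th' r\<bar> \<le> 1 \<and> \<bar>th' r - th' r\<bar> \<le> 0"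
          using W t by auto
        note P = BC[OF d Wp] and P' = BC[OF order_refl Wp']
        have ths: "\<bar>th (Suc m)\<bar> \<le> 1 \<and> \<bar>th' (Suc m)\<bar> \<le> 1 \<and> \<bar>th (Suc m) - th' (Suc m)\<bar> \<le> d"
          using W t by auto
        define a where "a = kappa_phi \<beta> \<kappa> th (Suc m) j"
        define a' where "a' = kappa_phi \<beta> \<kappa> th' (Suc m) j"
        have ab: "\<bar>a\<bar> \<le> B" "\<bar>a - a'\<bar> \<le> C * d" "\<bar>a'\<bar> \<le> B" using P P' unfolding a_def a'_def by auto
        have e1: "kappa_phi \<beta> \<kappa> th t (Suc j) = kappa_x \<beta> \<kappa> th t (Suc j) - th (Suc m) * a"
          unfolding t a_def by simp
        have e2: "kappa_phi \<beta> \<kappa> th' t (Suc j) = kappa_x \<beta> \<kappa> th' t (Suc j) - th' (Suc m) * a'"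
          unfolding t a'_def by simp
        have "\<bar>th (Suc m) * a\<bar> \<le> 1 * B" unfolding abs_mult using ths ab by (intro mult_mono) auto
        then have b1: "\<bar>kappa_phi \<beta> \<kappa> th t (Suc j)\<bar> \<le> \<bar>\<kappa> (Suc j)\<bar> + Kb \<kappa> (Suc j) + B"
        proof -
          have "\<bar>kappa_phi \<beta> \<kappa> th t (Suc j)\<bar> \<le> \<bar>kappa_x \<beta> \<kappa> th t (Suc j)\<bar> + \<bar>th (Suc m) * a\<bar>"
            unfolding e1 by linarith
          then show ?thesis using KX \<open>\<bar>th (Suc m) * a\<bar> \<le> 1 * B\<close> by linarith
        qed
        have "th (Suc m) * a - th' (Suc m) * a' = th (Suc m) * (a - a') + (th (Suc m) - th' (Suc m)) * a'"
          by (simp add: algebra_simps)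
        then have "\<bar>th (Suc m) * a - th' (Suc m) * a'\<bar> \<le> \<bar>th (Suc m)\<bar> * \<bar>a - a'\<bar> + \<bar>th (Suc m) - th' (Suc m)\<bar> * \<bar>a'\<bar>"
          by (simp add: abs_mult[symmetric] abs_triangle_ineq)
        also have "\<dots> \<le> 1 * (C * d) + d * B"
          using ths ab d by (intro add_mono mult_mono) auto
        finally have "\<bar>th (Suc m) * a - th' (Suc m) * a'\<bar> \<le> C * d + B * d" by (simp add: mult.commute)
        then have b2: "\<bar>kappa_phi \<beta> \<kappa> th t (Suc j) - kappa_phi \<beta> \<kappa> th' t (Suc j)\<bar> \<le> (Kb \<kappa> (Suc j) * real (Suc j) + C + B) * d"
        proof -
          have "\<bar>kappa_phi \<beta> \<kappa> th t (Suc j) - kappa_phi \<beta> \<kappa> th' t (Suc j)\<bar>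
              \<le> \<bar>kappa_x \<beta> \<kappa> th t (Suc j) - kappa_x \<beta> \<kappa> th' t (Suc j)\<bar> + \<bar>th (Suc m) * a - th' (Suc m) * a'\<bar>"
            unfolding e1 e2 by linarith
          also have "\<dots> \<le> Kb \<kappa> (Suc j) * (real (Suc j) * d) + (C * d + B * d)"
            using KX \<open>\<bar>th (Suc m) * a - th' (Suc m) * a'\<bar> \<le> C * d + B * d\<close> by (intro add_mono) auto
          also have "\<dots> = (Kb \<kappa> (Suc j) * real (Suc j) + C + B) * d" by (simp add: algebra_simps)
          finally show ?thesis .
        qed
        show ?thesis using b1 b2 by blast
      qed
    qed
  qed
qed



lemma null_bdd_mult:
  fixes f g :: "nat \<Rightarrow> real"
  assumes "f \<longlonglongrightarrow> 0" "eventually (\<lambda>n. \<bar>g n\<bar> \<le> M) sequentially"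
  shows "(\<lambda>n. f n * g n) \<longlonglongrightarrow> 0"
proof (rule Lim_null_comparison)
  show "eventually (\<lambda>n. norm (f n * g n) \<le> \<bar>f n\<bar> * M) sequentially"
    using assms(2) by eventually_elim (simp add: abs_mult mult_left_mono)
  have "(\<lambda>n. \<bar>f n\<bar>) \<longlonglongrightarrow> 0" using assms(1) by (simp add: tendsto_rabs_zero_iff)
  then show "(\<lambda>n. \<bar>f n\<bar> * M) \<longlonglongrightarrow> 0" by (rule tendsto_mult_left_zero)
qed

lemma square_sum:
  fixes c :: "nat \<Rightarrow> real"
  shows "(\<Sum>j=0..u. c j)^2 = (\<Sum>j=0..u. (c j)^2) + 2 * (\<Sum>k=0..u. \<Sum>j<k. c j * c k)"
proof (induction u)
  case 0 then show ?case by simp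
next
  case (Suc u)
  have "(\<Sum>j=0..Suc u. c j)^2 = ((\<Sum>j=0..u. c j) + c (Suc u))^2" by simp
  also have "\<dots> = (\<Sum>j=0..u. c j)^2 + 2 * (\<Sum>j=0..u. c j) * c (Suc u) + (c (Suc u))^2"
    by (simp add: power2_eq_square algebra_simps)
  finally have 1: "(\<Sum>j=0..Suc u. c j)^2 = (\<Sum>j=0..u. c j)^2 + 2 * (\<Sum>j=0..u. c j) * c (Suc u) + (c (Suc u))^2" .
  have 2: "(\<Sum>k=0..Suc u. \<Sum>j<k. c j * c k) = (\<Sum>k=0..u. \<Sum>j<k. c j * c k) + (\<Sum>j=0..u. c j) * c (Suc u)"
    by (simp add: sum_distrib_right atLeast0AtMost lessThan_Suc_atMost)
  have 3: "(\<Sum>j=0..Suc u. (c j)^2) = (\<Sum>j=0..u. (c j)^2) + (c (Suc u))^2" by simp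
  show ?case unfolding 1 2 3 Suc.IH by (simp add: algebra_simps)
qed

lemma theta_gap:
  fixes th :: "nat \<Rightarrow> real"
  assumes "(\<lambda>n. th (Suc n) - th n) \<longlonglongrightarrow> 0"
  shows "(\<lambda>n. th (n + g) - th n) \<longlonglongrightarrow> 0"
proof (induction g)
  case 0 then show ?case by simp
next
  case (Suc g)
  have "(\<lambda>n. th (Suc (n + g)) - th (n + g)) \<longlonglongrightarrow> 0"
    using LIMSEQ_ignore_initial_segment[OF assms, of g] by simp
  from tendsto_add[OF Suc.IH this] show ?case by simp
qed

lemma ev_bdd_sum:
  fixes f :: "nat \<Rightarrow> nat \<Rightarrow> real"
  assumes "\<And>j. j \<in> A \<Longrightarrow> \<exists>B. eventually (\<lambda>s. \<bar>f s j\<bar> \<le> B) sequentially" "finite A"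
  shows "\<exists>B. eventually (\<lambda>s. \<forall>j\<in>A. \<bar>f s j\<bar> \<le> B) sequentially"
  using assms(2,1)
proof (induction A rule: finite_induct)
  case empty then show ?case by simp
next
  case (insert x F)
  then obtain B1 where 1: "eventually (\<lambda>s. \<forall>j\<in>F. \<bar>f s j\<bar> \<le> B1) sequentially" by blast
  from insert obtain B2 where 2: "eventually (\<lambda>s. \<bar>f s x\<bar> \<le> B2) sequentially" by blast
  have "eventually (\<lambda>s. \<forall>j\<in>insert x F. \<bar>f s j\<bar> \<le> max B1 B2) sequentially"
    using 1 2 by eventually_elim auto
  then show ?case by blast
qed


definition trunc :: "nat \<Rightarrow> real \<Rightarrow> real" where
  "trunc N v = max (- real N) (min (real N) v)"

lemma trunc_id: "\<bar>v\<bar> \<le> real N \<Longrightarrow> trunc N v = v"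
  by (simp add: trunc_def)

lemma trunc_bd: "\<bar>trunc N v\<bar> \<le> real N"
  by (simp add: trunc_def)

lemma ev_bdd_all:
  fixes f :: "nat \<Rightarrow> real"
  assumes "eventually (\<lambda>s. \<bar>f s\<bar> \<le> B) sequentially"
  shows "\<exists>N::nat. \<forall>s. trunc N (f s) = f s"
proof -
  from assms obtain n1 where n1: "\<And>s. s \<ge> n1 \<Longrightarrow> \<bar>f s\<bar> \<le> B" by (auto simp: eventually_sequentially)
  define B' where "B' = max B (\<Sum>s<n1. \<bar>f s\<bar>)"
  have "\<bar>f s\<bar> \<le> B'" for s
  proof (cases "s < n1")
    case True
    then have "\<bar>f s\<bar> \<le> (\<Sum>s<n1. \<bar>f s\<bar>)" by (intro member_le_sum) auto
    then show ?thesis unfolding B'_def by simp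
  next
    case False then show ?thesis using n1[of s] unfolding B'_def by simp
  qed
  moreover obtain N :: nat where "B' \<le> real N" using real_arch_simple by blast
  ultimately show ?thesis by (intro exI[of _ N] allI trunc_id) (meson order_trans)
qed

lemma final_det:
  fixes th :: "nat \<Rightarrow> real" and E :: "int \<Rightarrow> real" and \<kappa> :: "nat \<Rightarrow> real"
    and \<beta> \<sigma>2 K :: real and u n0 :: nat
  assumes \<beta>: "0 \<le> \<beta>" "\<beta> \<le> 1"
    and dth: "(\<lambda>n. th (Suc n) - th n) \<longlonglongrightarrow> 0"
    and thb: "\<And>n. n \<ge> n0 \<Longrightarrow> \<bar>th n\<bar> \<le> 1"
    and Eb: "\<And>i. \<bar>E i\<bar> \<le> K"
    and H1T: "\<And>j N. j \<le> u \<Longrightarrow> (\<lambda>t. (1/real t) * (\<Sum>s=1..t. trunc N ((kappa_phi \<beta> \<kappa> (\<lambda>_. th (s - Suc u)) s j)^2)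
                 * ((E (int s - int j))^2 - \<sigma>2))) \<longlonglongrightarrow> 0"
    and H2T: "\<And>j k N. j < k \<Longrightarrow> k \<le> u \<Longrightarrow> (\<lambda>t. (1/real t) * (\<Sum>s=1..t.
                 trunc N (kappa_phi \<beta> \<kappa> (\<lambda>_. th (s - Suc u)) s j * kappa_phi \<beta> \<kappa> (\<lambda>_. th (s - Suc u)) s k
                   * E (int s - int k)) * E (int s - int j))) \<longlonglongrightarrow> 0"
  shows "(\<lambda>t. (1 / real t) * (\<Sum>s = 1..t. (\<Sum>j = 0..u. kappa_phi \<beta> \<kappa> th s j * E (int s - int j))\<^sup>2)
            - (\<sigma>2 / real t) * (\<Sum>s = 1..t. \<Sum>j = 0..u. (kappa_phi \<beta> \<kappa> th s j)\<^sup>2)) \<longlonglongrightarrow> 0"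
proof -
  define L where "L = Suc u"
  define a where "a s j = kappa_phi \<beta> \<kappa> th s j" for s j
  define a' where "a' s j = kappa_phi \<beta> \<kappa> (\<lambda>_. th (s - L)) s j" for s j
  define d where "d s = (\<Sum>i=1..L. \<bar>th (s - i) - th (s - L)\<bar>)" for s
  have dlim: "d \<longlonglongrightarrow> 0"
  proof -
    have "(\<lambda>s. \<Sum>i=1..L. \<bar>th (s - i) - th (s - L)\<bar>) \<longlonglongrightarrow> (\<Sum>i=1..L. 0)"
    proof (intro tendsto_sum)
      fix i assume i: "i \<in> {1..L}"
      have "(\<lambda>m. th (m + (L - i)) - th m) \<longlonglongrightarrow> 0" by (rule theta_gap[OF dth])
      then have "(\<lambda>m. th (m + L - i) - th (m + L - L)) \<longlonglongrightarrow> 0" using i by simp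
      then have "(\<lambda>s. th (s - i) - th (s - L)) \<longlonglongrightarrow> 0" by (rule LIMSEQ_offset)
      then show "(\<lambda>s. \<bar>th (s - i) - th (s - L)\<bar>) \<longlonglongrightarrow> 0" by (simp add: tendsto_rabs_zero_iff)
    qed
    then show ?thesis unfolding d_def by simp
  qed
  have step1: "(\<lambda>s. a s j - a' s j) \<longlonglongrightarrow> 0 \<and> (\<exists>B. eventually (\<lambda>s. \<bar>max \<bar>a s j\<bar> \<bar>a' s j\<bar>\<bar> \<le> B) sequentially)"
    if j: "j \<le> u" for j
  proof -
    obtain B C where BC: "\<And>t th th' dd. 0 \<le> dd \<Longrightarrow>
      (\<forall>r. 1 \<le> r \<longrightarrow> r < t \<longrightarrow> t \<le> r + j \<longrightarrow> \<bar>th r\<bar> \<le> 1 \<and> \<bar>th' r\<bar> \<le> 1 \<and> \<bar>th r - th' r\<bar> \<le> dd) \<Longrightarrow>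
      \<bar>kappa_phi \<beta> \<kappa> th t j\<bar> \<le> B \<and> \<bar>kappa_phi \<beta> \<kappa> th t j - kappa_phi \<beta> \<kappa> th' t j\<bar> \<le> C * dd"
      using kp_lip[OF \<beta>, where j=j and \<kappa>=\<kappa>] by blast
    have ev: "\<bar>a s j\<bar> \<le> B \<and> \<bar>a' s j\<bar> \<le> B \<and> \<bar>a s j - a' s j\<bar> \<le> C * d s" if s: "s \<ge> n0 + L" for s
    proof -
      have d0: "0 \<le> d s" unfolding d_def by (intro sum_nonneg) auto
      have thL: "\<bar>th (s - L)\<bar> \<le> 1" using s by (intro thb) auto
      have Wr: "\<forall>r. 1 \<le> r \<longrightarrow> r < s \<longrightarrow> s \<le> r + j \<longrightarrow> \<bar>th r\<bar> \<le> 1 \<and> \<bar>th (s - L)\<bar> \<le> 1 \<and> \<bar>th r - th (s - L)\<bar> \<le> d s"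
      proof (intro allI impI conjI thL)
        fix r assume r: "1 \<le> r" "r < s" "s \<le> r + j"
        show "\<bar>th r\<bar> \<le> 1" using r s j by (intro thb) (auto simp: L_def)
        have "r = s - (s - r)" using r by simp
        moreover have "s - r \<in> {1..L}" using r j by (auto simp: L_def)
        ultimately show "\<bar>th r - th (s - L)\<bar> \<le> d s"
          unfolding d_def by (metis (no_types, lifting) finite_atLeastAtMost member_le_sum abs_ge_zero)
      qed
      have Wr': "\<forall>r. 1 \<le> r \<longrightarrow> r < s \<longrightarrow> s \<le> r + j \<longrightarrow> \<bar>th (s - L)\<bar> \<le> 1 \<and> \<bar>th (s - L)\<bar> \<le> 1 \<and> \<bar>th (s - L) - th (s - L)\<bar> \<le> 0"
        using thL by simp
      from BC[OF d0 Wr] BC[OF order_refl Wr'] show ?thesis unfolding a_def a'_def by auto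
    qed
    have "(\<lambda>s. a s j - a' s j) \<longlonglongrightarrow> 0"
    proof (rule Lim_null_comparison)
      show "eventually (\<lambda>s. norm (a s j - a' s j) \<le> C * d s) sequentially"
        using ev by (intro eventually_sequentiallyI[of "n0 + L"]) auto
      show "(\<lambda>s. C * d s) \<longlonglongrightarrow> 0" using tendsto_mult_right_zero[OF dlim] by simp
    qed
    moreover have "eventually (\<lambda>s. \<bar>max \<bar>a s j\<bar> \<bar>a' s j\<bar>\<bar> \<le> B) sequentially"
      using ev by (intro eventually_sequentiallyI[of "n0 + L"]) auto
    ultimately show ?thesis by blast
  qed
  obtain B where Bev: "eventually (\<lambda>s. \<forall>j\<in>{0..u}. \<bar>max \<bar>a s j\<bar> \<bar>a' s j\<bar>\<bar> \<le> B) sequentially"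
    using ev_bdd_sum[of "{0..u}" "\<lambda>s j. max \<bar>a s j\<bar> \<bar>a' s j\<bar>"] step1 by auto
  have Bev': "eventually (\<lambda>s. \<forall>j\<in>{0..u}. \<bar>a s j\<bar> \<le> B \<and> \<bar>a' s j\<bar> \<le> B) sequentially"
    using Bev by eventually_elim auto
  have K0: "0 \<le> K" using Eb[of 0] by simp
  have H1: "(\<lambda>t. (1/real t) * (\<Sum>s=1..t. (a' s j)^2 * ((E (int s - int j))^2 - \<sigma>2))) \<longlonglongrightarrow> 0"
    if j: "j \<le> u" for j
  proof -
    have "eventually (\<lambda>s. \<bar>(a' s j)^2\<bar> \<le> B^2) sequentially"
      using Bev'
    proof eventually_elim
      case (elim s) then have "\<bar>a' s j\<bar> \<le> B" using j by auto
      then show ?case using pw_bd[of "a' s j" B 2] by simp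
    qed
    from ev_bdd_all[OF this] obtain N where "\<forall>s. trunc N ((a' s j)^2) = (a' s j)^2" by blast
    then show ?thesis using H1T[OF j, of N] unfolding a'_def L_def by simp
  qed
  have H2: "(\<lambda>t. (1/real t) * (\<Sum>s=1..t. (a' s j * a' s k * E (int s - int k)) * E (int s - int j))) \<longlonglongrightarrow> 0"
    if jk: "j < k" "k \<le> u" for j k
  proof -
    have "eventually (\<lambda>s. \<bar>a' s j * a' s k * E (int s - int k)\<bar> \<le> B * B * K) sequentially"
      using Bev'
    proof eventually_elim
      case (elim s) then have "\<bar>a' s j\<bar> \<le> B" "\<bar>a' s k\<bar> \<le> B" using jk by auto
      then show ?case unfolding abs_mult using Eb K0 by (intro mult_mono) auto
    qed
    from ev_bdd_all[OF this] obtain N where "\<forall>s. trunc N (a' s j * a' s k * E (int s - int k)) = a' s j * a' s k * E (int s - int k)"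
      by blast
    then show ?thesis using H2T[OF jk, of N] unfolding a'_def L_def by simp
  qed
  define P where "P s = (\<Sum>j=0..u. a s j * E (int s - int j))" for s
  define P' where "P' s = (\<Sum>j=0..u. a' s j * E (int s - int j))" for s
  define Q where "Q s = (P s)^2 - \<sigma>2 * (\<Sum>j=0..u. (a s j)^2)" for s
  define Q' where "Q' s = (P' s)^2 - \<sigma>2 * (\<Sum>j=0..u. (a' s j)^2)" for s
  have PP: "(\<lambda>s. P s - P' s) \<longlonglongrightarrow> 0"
  proof -
    have "(\<lambda>s. \<Sum>j=0..u. (a s j - a' s j) * E (int s - int j)) \<longlonglongrightarrow> (\<Sum>j=0..u. 0)"
      by (intro tendsto_sum null_bdd_mult[where M=K] always_eventually allI Eb) (use step1 in auto)
    then show ?thesis unfolding P_def P'_def by (simp add: sum_subtractf[symmetric] algebra_simps)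
  qed
  have PPb: "eventually (\<lambda>s. \<bar>P s + P' s\<bar> \<le> (\<Sum>j=0..u. 2 * B * K)) sequentially"
    using Bev'
  proof eventually_elim
    case (elim s)
    have "\<bar>P s + P' s\<bar> = \<bar>\<Sum>j=0..u. (a s j + a' s j) * E (int s - int j)\<bar>"
      unfolding P_def P'_def by (simp add: sum.distrib[symmetric] algebra_simps)
    also have "\<dots> \<le> (\<Sum>j=0..u. \<bar>(a s j + a' s j) * E (int s - int j)\<bar>)" by (rule sum_abs)
    also have "\<dots> \<le> (\<Sum>j=0..u. 2 * B * K)"
    proof (rule sum_mono)
      fix j assume j: "j \<in> {0..u}"
      have "\<bar>a s j\<bar> \<le> B" "\<bar>a' s j\<bar> \<le> B" using elim j by auto
      then have "\<bar>a s j + a' s j\<bar> \<le> 2 * B" using abs_triangle_ineq[of "a s j" "a' s j"] by linarith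
      then show "\<bar>(a s j + a' s j) * E (int s - int j)\<bar> \<le> 2 * B * K"
        unfolding abs_mult using Eb K0 by (intro mult_mono) auto
    qed
    finally show ?case .
  qed
  have AA: "(\<lambda>s. (\<Sum>j=0..u. (a s j)^2) - (\<Sum>j=0..u. (a' s j)^2)) \<longlonglongrightarrow> 0"
  proof -
    have "(\<lambda>s. \<Sum>j=0..u. (a s j - a' s j) * (a s j + a' s j)) \<longlonglongrightarrow> (\<Sum>j=0..u. 0)"
    proof (intro tendsto_sum)
      fix j assume j: "j \<in> {0..u}"
      show "(\<lambda>s. (a s j - a' s j) * (a s j + a' s j)) \<longlonglongrightarrow> 0"
      proof (rule null_bdd_mult[where M="2 * B"])
        show "(\<lambda>s. a s j - a' s j) \<longlonglongrightarrow> 0" using step1 j by auto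
        show "eventually (\<lambda>s. \<bar>a s j + a' s j\<bar> \<le> 2 * B) sequentially"
          using Bev'
        proof eventually_elim
          case (elim s)
          then have "\<bar>a s j\<bar> \<le> B" "\<bar>a' s j\<bar> \<le> B" using j by auto
          then show ?case using abs_triangle_ineq[of "a s j" "a' s j"] by linarith
        qed
      qed
    qed
    then show ?thesis by (simp add: sum_subtractf[symmetric] power2_eq_square algebra_simps)
  qed
  have QQ: "(\<lambda>s. Q s - Q' s) \<longlonglongrightarrow> 0"
  proof -
    have "(\<lambda>s. (P s - P' s) * (P s + P' s) - \<sigma>2 * ((\<Sum>j=0..u. (a s j)^2) - (\<Sum>j=0..u. (a' s j)^2))) \<longlonglongrightarrow> 0 - \<sigma>2 * 0"
      by (intro tendsto_diff tendsto_mult null_bdd_mult[OF PP PPb] tendsto_const AA)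
    then show ?thesis unfolding Q_def Q'_def by (simp add: power2_eq_square algebra_simps)
  qed
  have C1: "(\<lambda>t. (1 / real t) * (\<Sum>s=1..t. Q s - Q' s)) \<longlonglongrightarrow> 0"
    by (rule cesaro_null[OF QQ])
  have Q'eq: "Q' s = (\<Sum>j=0..u. (a' s j)^2 * ((E (int s - int j))^2 - \<sigma>2))
      + 2 * (\<Sum>k=0..u. \<Sum>j<k. (a' s j * a' s k * E (int s - int k)) * E (int s - int j))" for s
  proof -
    have "(P' s)^2 = (\<Sum>j=0..u. (a' s j * E (int s - int j))^2)
        + 2 * (\<Sum>k=0..u. \<Sum>j<k. (a' s j * E (int s - int j)) * (a' s k * E (int s - int k)))"
      unfolding P'_def by (rule square_sum)
    then show ?thesis unfolding Q'_def
      by (simp add: sum_subtractf sum_distrib_left power_mult_distrib algebra_simps)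
  qed
  have C2: "(\<lambda>t. (1 / real t) * (\<Sum>s=1..t. Q' s)) \<longlonglongrightarrow> 0"
  proof -
    have eq: "(1 / real t) * (\<Sum>s=1..t. Q' s) =
        (\<Sum>j=0..u. (1/real t) * (\<Sum>s=1..t. (a' s j)^2 * ((E (int s - int j))^2 - \<sigma>2)))
      + 2 * (\<Sum>k=0..u. \<Sum>j<k. (1/real t) * (\<Sum>s=1..t. (a' s j * a' s k * E (int s - int k)) * E (int s - int j)))" for t
    proof -
      define F where "F s j = (a' s j)^2 * ((E (int s - int j))^2 - \<sigma>2)" for s j
      define G where "G s j k = (a' s j * a' s k * E (int s - int k)) * E (int s - int j)" for s j k
      have s1: "(\<Sum>s=1..t. \<Sum>j=0..u. F s j) = (\<Sum>j=0..u. \<Sum>s=1..t. F s j)" by (rule sum.swap)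
      have "(\<Sum>s=1..t. \<Sum>k=0..u. \<Sum>j<k. G s j k) = (\<Sum>k=0..u. \<Sum>s=1..t. \<Sum>j<k. G s j k)" by (rule sum.swap)
      also have "\<dots> = (\<Sum>k=0..u. \<Sum>j<k. \<Sum>s=1..t. G s j k)" by (intro sum.cong refl sum.swap)
      finally have s2: "(\<Sum>s=1..t. \<Sum>k=0..u. \<Sum>j<k. G s j k) = (\<Sum>k=0..u. \<Sum>j<k. \<Sum>s=1..t. G s j k)" .
      have "(\<Sum>s=1..t. Q' s) = (\<Sum>s=1..t. \<Sum>j=0..u. F s j) + 2 * (\<Sum>s=1..t. \<Sum>k=0..u. \<Sum>j<k. G s j k)"
        unfolding Q'eq F_def G_def by (simp add: sum.distrib sum_distrib_left)
      also have "\<dots> = (\<Sum>j=0..u. \<Sum>s=1..t. F s j) + 2 * (\<Sum>k=0..u. \<Sum>j<k. \<Sum>s=1..t. G s j k)"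
        unfolding s1 s2 ..
      finally show ?thesis unfolding F_def G_def by (simp add: sum_distrib_left algebra_simps)
    qed
    have "(\<lambda>t. (\<Sum>j=0..u. (1/real t) * (\<Sum>s=1..t. (a' s j)^2 * ((E (int s - int j))^2 - \<sigma>2)))
      + 2 * (\<Sum>k=0..u. \<Sum>j<k. (1/real t) * (\<Sum>s=1..t. (a' s j * a' s k * E (int s - int k)) * E (int s - int j))))
      \<longlonglongrightarrow> (\<Sum>j=0..u. 0) + 2 * (\<Sum>k=0..u. \<Sum>j<k. 0)"
      by (intro tendsto_add tendsto_mult tendsto_const tendsto_sum H1 H2) auto
    then show ?thesis unfolding eq by simp
  qed
  have "(\<lambda>t. (1 / real t) * (\<Sum>s=1..t. Q s - Q' s) + (1 / real t) * (\<Sum>s=1..t. Q' s)) \<longlonglongrightarrow> 0 + 0"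
    by (intro tendsto_add C1 C2)
  moreover have "(1 / real t) * (\<Sum>s=1..t. Q s - Q' s) + (1 / real t) * (\<Sum>s=1..t. Q' s) =
     (1 / real t) * (\<Sum>s = 1..t. (\<Sum>j = 0..u. kappa_phi \<beta> \<kappa> th s j * E (int s - int j))\<^sup>2)
            - (\<sigma>2 / real t) * (\<Sum>s = 1..t. \<Sum>j = 0..u. (kappa_phi \<beta> \<kappa> th s j)\<^sup>2)" for t
    unfolding Q_def P_def a_def
    by (simp add: sum_subtractf sum_distrib_left sum.distrib[symmetric] algebra_simps)
  ultimately show ?thesis by simp
qed



lemma slln_apply:
  fixes M :: "'a measure" and Fn :: "nat \<Rightarrow> 'a measure" and G H :: "nat \<Rightarrow> 'a \<Rightarrow> real"
  assumes P: "prob_space M"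
  and sub: "\<And>n. subalgebra M (Fn n)"
  and mono: "\<And>n m. n \<le> m \<Longrightarrow> sets (Fn n) \<subseteq> sets (Fn m)"
  and Gm: "\<And>n. G (Suc n) \<in> borel_measurable (Fn n)" and G0: "G 0 \<in> borel_measurable (Fn 0)"
  and Hm: "\<And>n. H n \<in> borel_measurable (Fn n)" and Hb: "\<And>n x. x \<in> space M \<Longrightarrow> \<bar>H n x\<bar> \<le> KH"
  and orthH: "\<And>n Z C. Z \<in> borel_measurable (Fn n) \<Longrightarrow> (\<And>x. x \<in> space M \<Longrightarrow> \<bar>Z x\<bar> \<le> C)
              \<Longrightarrow> (\<integral>x. Z x * H (Suc n) x \<partial>M) = 0"
  shows "AE x in M. \<forall>N. (\<lambda>t. (1/real t) * (\<Sum>s=1..t. trunc N (G s x) * H s x)) \<longlonglongrightarrow> 0"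
proof -
  have spF: "space (Fn n) = space M" for n using sub[of n] by (simp add: subalgebra_def)
  have subFF: "subalgebra (Fn m) (Fn n)" if "n \<le> m" for n m
    using mono[OF that] by (simp add: subalgebra_def spF)
  have GmF: "G n \<in> borel_measurable (Fn n)" for n
  proof (cases n)
    case 0 then show ?thesis using G0 by simp
  next
    case (Suc m) then show ?thesis using measurable_from_subalg[OF subFF Gm[of m]] by simp
  qed
  have KH0: "0 \<le> KH" if "x \<in> space M" for x using Hb[OF that, of 0] by simp
  have "AE x in M. (\<lambda>t. (1/real t) * (\<Sum>s=1..t. trunc N (G s x) * H s x)) \<longlonglongrightarrow> 0" for N
  proof (rule slln_core[OF P sub mono, where B="real N * KH"])
    show "(\<lambda>x. trunc N (G n x) * H n x) \<in> borel_measurable (Fn n)" for n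
      unfolding trunc_def using GmF[of n] Hm[of n] by measurable
    show "\<bar>trunc N (G n x) * H n x\<bar> \<le> real N * KH" if "x \<in> space M" for n x
      unfolding abs_mult using trunc_bd Hb[OF that] by (intro mult_mono) auto
    show "(\<integral>x. Z x * (trunc N (G (Suc n) x) * H (Suc n) x) \<partial>M) = 0"
      if Z: "Z \<in> borel_measurable (Fn n)" "\<And>x. x \<in> space M \<Longrightarrow> \<bar>Z x\<bar> \<le> C" for n Z C
    proof -
      have "(\<integral>x. (Z x * trunc N (G (Suc n) x)) * H (Suc n) x \<partial>M) = 0"
      proof (rule orthH)
        show "(\<lambda>x. Z x * trunc N (G (Suc n) x)) \<in> borel_measurable (Fn n)"
          unfolding trunc_def using Z(1) Gm[of n] by measurable
        show "\<bar>Z x * trunc N (G (Suc n) x)\<bar> \<le> C * real N" if "x \<in> space M" for x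
          unfolding abs_mult using trunc_bd Z(2)[OF that] by (intro mult_mono) auto
      qed
      then show ?thesis by (simp add: mult.assoc)
    qed
  qed
  then show ?thesis by (simp add: AE_all_countable)
qed

lemma nat_filtration_props:
  fixes M :: "'a measure" and y :: "int \<Rightarrow> 'a \<Rightarrow> real"
  assumes ym: "\<And>t. y t \<in> borel_measurable M"
  shows "space (nat_filtration M y i) = space M"
    and "sets (nat_filtration M y i) = sigma_sets (space M) {y s -` A \<inter> space M | s A. s \<le> i \<and> A \<in> sets borel}"
    and "subalgebra M (nat_filtration M y i)"
    and "i \<le> i' \<Longrightarrow> sets (nat_filtration M y i) \<subseteq> sets (nat_filtration M y i')"
    and "s \<le> i \<Longrightarrow> y s \<in> borel_measurable (nat_filtration M y i)"
proof -
  have gen: "{y s -` A \<inter> space M | s A. s \<le> i \<and> A \<in> sets borel} \<subseteq> Pow (space M)" for i by auto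
  show sp: "space (nat_filtration M y i) = space M" for i
    unfolding nat_filtration_def by (rule space_measure_of[OF gen])
  show st: "sets (nat_filtration M y i) = sigma_sets (space M) {y s -` A \<inter> space M | s A. s \<le> i \<and> A \<in> sets borel}" for i
    unfolding nat_filtration_def by (rule sets_measure_of[OF gen])
  have "{y s -` A \<inter> space M | s A. s \<le> i \<and> A \<in> sets borel} \<subseteq> sets M"
    using ym by (auto simp: measurable_sets)
  then have "sigma_sets (space M) {y s -` A \<inter> space M | s A. s \<le> i \<and> A \<in> sets borel} \<subseteq> sets M"
    by (rule sets.sigma_sets_subset)
  then show "subalgebra M (nat_filtration M y i)" unfolding subalgebra_def using sp st by auto
  show "i \<le> i' \<Longrightarrow> sets (nat_filtration M y i) \<subseteq> sets (nat_filtration M y i')"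
    unfolding st by (intro sigma_sets_mono') (auto intro: order_trans)
  assume si: "s \<le> i"
  show "y s \<in> borel_measurable (nat_filtration M y i)"
  proof (rule measurableI)
    fix x assume "x \<in> space (nat_filtration M y i)"
    then show "y s x \<in> space borel" by simp
  next
    fix A :: "real set" assume "A \<in> sets borel"
    then have "y s -` A \<inter> space M \<in> {y s -` A \<inter> space M | s A. s \<le> i \<and> A \<in> sets borel}" using si by blast
    then show "y s -` A \<inter> space (nat_filtration M y i) \<in> sets (nat_filtration M y i)"
      unfolding sp st by auto
  qed
qed


lemma rls_meas:
  fixes N :: "'a measure" and Yf :: "nat \<Rightarrow> 'a \<Rightarrow> real"
  assumes Ym: "\<And>n. 1 \<le> n \<Longrightarrow> n \<le> t \<Longrightarrow> Yf n \<in> borel_measurable N"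
  shows "(\<lambda>x. rls_theta \<beta> (\<lambda>n. Yf n x) t) \<in> borel_measurable N \<and>
         (\<lambda>x. rls_x \<beta> (\<lambda>n. Yf n x) t) \<in> borel_measurable N \<and>
         (\<lambda>x. rls_e \<beta> (\<lambda>n. Yf n x) t) \<in> borel_measurable N \<and>
         (\<lambda>x. rls_phi \<beta> (\<lambda>n. Yf n x) t) \<in> borel_measurable N \<and>
         (\<lambda>x. rls_S \<beta> (\<lambda>n. Yf n x) t) \<in> borel_measurable N"
  using Ym
proof (induction t)
  case 0 then show ?case by (simp add: rls_theta_def rls_x_def rls_e_def rls_phi_def rls_S_def)
next
  case (Suc t)
  show ?case
  proof (cases t)
    case 0
    have Y1: "Yf (Suc 0) \<in> borel_measurable N" using Suc.prems[of 1] 0 by simp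
    have "(\<lambda>x. (Yf (Suc 0) x)^2) \<in> borel_measurable N" using Y1 by measurable
    then show ?thesis using 0 Y1 by (simp add: rls_theta_def rls_x_def rls_e_def rls_phi_def rls_S_def)
  next
    case (Suc m)
    have IH: "(\<lambda>x. rls_theta \<beta> (\<lambda>n. Yf n x) (Suc m)) \<in> borel_measurable N"
         "(\<lambda>x. rls_x \<beta> (\<lambda>n. Yf n x) (Suc m)) \<in> borel_measurable N"
         "(\<lambda>x. rls_e \<beta> (\<lambda>n. Yf n x) (Suc m)) \<in> borel_measurable N"
         "(\<lambda>x. rls_phi \<beta> (\<lambda>n. Yf n x) (Suc m)) \<in> borel_measurable N"
         "(\<lambda>x. rls_S \<beta> (\<lambda>n. Yf n x) (Suc m)) \<in> borel_measurable N"
      using Suc.IH Suc.prems Suc by auto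
    have Yt: "Yf (Suc (Suc m)) \<in> borel_measurable N" using Suc.prems[of "Suc (Suc m)"] Suc by simp
    note [measurable] = IH Yt
    have mx: "(\<lambda>x. rls_x \<beta> (\<lambda>n. Yf n x) (Suc (Suc m))) \<in> borel_measurable N"
      by (simp only: rls_SS) measurable
    have me: "(\<lambda>x. rls_e \<beta> (\<lambda>n. Yf n x) (Suc (Suc m))) \<in> borel_measurable N"
      by (simp only: rls_SS) measurable
    note [measurable] = mx me
    have mp: "(\<lambda>x. rls_phi \<beta> (\<lambda>n. Yf n x) (Suc (Suc m))) \<in> borel_measurable N"
      by (simp only: rls_SS(3)) measurable
    note [measurable] = mp
    have mS: "(\<lambda>x. rls_S \<beta> (\<lambda>n. Yf n x) (Suc (Suc m))) \<in> borel_measurable N"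
      by (simp only: rls_SS(4)) measurable
    have mt: "(\<lambda>x. rls_theta \<beta> (\<lambda>n. Yf n x) (Suc (Suc m))) \<in> borel_measurable N"
      by (simp only: rls_SS(5)) measurable
    show ?thesis using Suc mx me mp mS mt by simp
  qed
qed

lemma kx_const_meas:
  assumes [measurable]: "f \<in> borel_measurable N"
  shows "(\<lambda>x. kappa_x \<beta> \<kappa> (\<lambda>_. f x) t j) \<in> borel_measurable N"
  unfolding kappa_x_def by measurable

lemma kp_const_meas:
  assumes fm: "f \<in> borel_measurable N"
  shows "(\<lambda>x. kappa_phi \<beta> \<kappa> (\<lambda>_. f x) s j) \<in> borel_measurable N"
proof (induction s arbitrary: j)
  case 0 then show ?case by simp
next
  case (Suc s)
  note IHs = Suc.IH
  show ?case
  proof (cases s)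
    case 0 then show ?thesis by simp
  next
    case (Suc n)
    note sn = this
    show ?thesis
    proof (cases j)
      case 0 then show ?thesis using Suc kx_const_meas[OF fm] by simp
    next
      case (Suc j')
      have [measurable]: "(\<lambda>x. kappa_phi \<beta> \<kappa> (\<lambda>_. f x) (Suc n) j') \<in> borel_measurable N"
        using IHs[of j'] sn by simp
      have [measurable]: "(\<lambda>x. kappa_x \<beta> \<kappa> (\<lambda>_. f x) (Suc (Suc n)) (Suc j')) \<in> borel_measurable N"
        by (rule kx_const_meas[OF fm])
      note [measurable] = fm
      show ?thesis using sn Suc by simp measurable
    qed
  qed
qed



lemma y_bound:
  fixes \<kappa> e :: "nat \<Rightarrow> real"
  assumes s: "(\<lambda>s. \<kappa> s * e s) sums v" and a: "summable (\<lambda>s. \<bar>\<kappa> s\<bar>)" and eb: "\<And>s. \<bar>e s\<bar> \<le> K"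
  shows "\<bar>v\<bar> \<le> K * (\<Sum>s. \<bar>\<kappa> s\<bar>)"
proof -
  have g: "summable (\<lambda>s. \<bar>\<kappa> s\<bar> * K)" by (rule summable_mult2[OF a])
  have le: "\<bar>\<kappa> s * e s\<bar> \<le> \<bar>\<kappa> s\<bar> * K" for s unfolding abs_mult by (intro mult_left_mono eb) auto
  have ab: "summable (\<lambda>s. \<bar>\<kappa> s * e s\<bar>)"
    by (rule summable_rabs_comparison_test[OF _ g]) (use le in auto)
  have "\<bar>v\<bar> = \<bar>\<Sum>s. \<kappa> s * e s\<bar>" using s by (simp add: sums_iff)
  also have "\<dots> \<le> (\<Sum>s. \<bar>\<kappa> s * e s\<bar>)" by (rule summable_rabs[OF ab])
  also have "\<dots> \<le> (\<Sum>s. \<bar>\<kappa> s\<bar> * K)" by (rule suminf_le[OF le ab g])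
  also have "\<dots> = K * (\<Sum>s. \<bar>\<kappa> s\<bar>)" using suminf_mult2[OF a, of K] by (simp add: mult.commute)
  finally show ?thesis .
qed

theorem lemma4p3:
  fixes M :: "'a measure" and y \<epsilon> :: "int \<Rightarrow> 'a \<Rightarrow> real" and \<kappa> :: "nat \<Rightarrow> real"
    and \<sigma>2 K \<beta> :: real and kst :: "'a \<Rightarrow> nat" and Kst :: "'a \<Rightarrow> real" and u :: nat
  assumes prob: "prob_space M"
    (* real, mean-zero, covariance-stationary *)
    and y_meas: "\<And>t. y t \<in> borel_measurable M"
    and y_sq: "\<And>t. integrable M (\<lambda>x. (y t x)\<^sup>2)"
    and y_mean: "\<And>t. integral\<^sup>L M (y t) = 0"
    and y_cov: "\<And>t h. integral\<^sup>L M (\<lambda>x. y t x * y (t + h) x) = integral\<^sup>L M (\<lambda>x. y 0 x * y h x)"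
    (* D1 *)
    and D1: "measure M {x \<in> space M. (y 1 x)\<^sup>2 > 0} = 1"
    (* D2 *)
    and D2_ma: "AE x in M. \<forall>t. (\<lambda>s. \<kappa> s * \<epsilon> (t - int s) x) sums y t x"
    and D2_k0: "\<kappa> 0 = 1"
    and D2_abs: "summable (\<lambda>s. \<bar>\<kappa> s\<bar>)"
    and D2_root: "\<And>z::complex. cmod z \<le> 1 \<Longrightarrow> (\<Sum>s. complex_of_real (\<kappa> s) * z ^ s) \<noteq> 0"
    and mds_adapted: "\<And>t. \<epsilon> t \<in> borel_measurable (nat_filtration M y t)"
    and mds_int: "\<And>t. integrable M (\<epsilon> t)"
    and mds: "\<And>t. AE x in M. real_cond_exp M (nat_filtration M y (t - 1)) (\<epsilon> t) x = 0"
    (* D3 *)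
    and D3: "\<And>t. AE x in M.
               real_cond_exp M (nat_filtration M y (t - 1)) (\<lambda>x. (\<epsilon> t x)\<^sup>2) x = \<sigma>2"
    (* D4 *)
    and D4: "AE x in M. \<forall>t. \<bar>\<epsilon> t x\<bar> \<le> K"
    (* algorithm and stability of theta *)
    and \<beta>: "0 \<le> \<beta>" "\<beta> \<le> 1"
    and kst_meas: "kst \<in> measurable M (count_space UNIV)"
    and Kst_meas: "Kst \<in> borel_measurable M"
    and stab: "AE x in M. 0 < Kst x \<and> Kst x < 1 \<and>
                 (\<forall>t\<ge>1. \<bar>rls_theta \<beta> (\<lambda>n. y (int n) x) (t + kst x)\<bar> \<le> Kst x)"
  shows "AE x in M.
    (\<lambda>t. (1 / real t) * (\<Sum>s = 1..t.
            (\<Sum>j = 0..u. kappa_phi \<beta> \<kappa> (rls_theta \<beta> (\<lambda>n. y (int n) x)) s j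
                           * \<epsilon> (int s - int j) x)\<^sup>2)
         - (\<sigma>2 / real t) * (\<Sum>s = 1..t. \<Sum>j = 0..u.
            (kappa_phi \<beta> \<kappa> (rls_theta \<beta> (\<lambda>n. y (int n) x)) s j)\<^sup>2))
    \<longlonglongrightarrow> 0"
proof -
  interpret prob_space M by (rule prob)
  define F where "F i = nat_filtration M y i" for i
  note NF = nat_filtration_props[OF y_meas]
  have spF: "space (F i) = space M" for i unfolding F_def by (rule NF(1))
  have subF: "subalgebra M (F i)" for i unfolding F_def by (rule NF(3))
  have monoF: "i \<le> i' \<Longrightarrow> sets (F i) \<subseteq> sets (F i')" for i i' unfolding F_def by (rule NF(4))
  have subFF: "subalgebra (F i') (F i)" if "i \<le> i'" for i i'
    using monoF[OF that] by (simp add: subalgebra_def spF)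
  have ymF: "s \<le> i \<Longrightarrow> y s \<in> borel_measurable (F i)" for s i unfolding F_def by (rule NF(5))
  define th where "th r x = rls_theta \<beta> (\<lambda>n. y (int n) x) r" for r x
  have thmF: "th t \<in> borel_measurable (F i)" if "t = 0 \<or> int t \<le> i" for t i
  proof (cases "t = 0")
    case True then show ?thesis unfolding th_def by (simp add: rls_theta_def)
  next
    case False
    then have ti: "int t \<le> i" using that by simp
    have "(\<lambda>x. rls_theta \<beta> (\<lambda>n. y (int n) x) t) \<in> borel_measurable (F i)"
    proof -
      have "y (int n) \<in> borel_measurable (F i)" if "1 \<le> n" "n \<le> t" for n
        using that ti by (intro ymF) auto
      then show ?thesis using rls_meas[of t "\<lambda>n. y (int n)" "F i" \<beta>] by blast
    qed
    then show ?thesis unfolding th_def .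
  qed
  define et where "et i x = max (- K) (min K (\<epsilon> i x))" for i x
  have etm: "et i \<in> borel_measurable (F i)" for i
    unfolding et_def using mds_adapted[of i] unfolding F_def by measurable
  have etmF: "et i \<in> borel_measurable (F i')" if "i \<le> i'" for i i'
    using measurable_from_subalg[OF subFF[OF that] etm] .
  have etM[measurable]: "et i \<in> borel_measurable M" for i using measurable_from_subalg[OF subF etm] .
  have etb: "\<bar>et i x\<bar> \<le> \<bar>K\<bar>" for i x unfolding et_def by auto
  have AEet: "AE x in M. \<forall>i. et i x = \<epsilon> i x"
    using D4
  proof eventually_elim
    case (elim x)
    show ?case
    proof
      fix i have "\<bar>\<epsilon> i x\<bar> \<le> K" using elim by auto
      then show "et i x = \<epsilon> i x" unfolding et_def by (simp add: abs_le_iff)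
    qed
  qed
  have epsM[measurable]: "\<epsilon> i \<in> borel_measurable M" for i
    using measurable_from_subalg[OF subF mds_adapted[of i, folded F_def]] .
  have sfs: "sigma_finite_subalgebra M (F i)" for i
  proof -
    have "finite_measure_subalgebra M (F i)"
      by (intro finite_measure_subalgebra.intro finite_measure_subalgebra_axioms.intro subF finite_measure_axioms)
    then show ?thesis by (rule finite_measure_subalgebra_is_sigma_finite)
  qed
  have orth1: "(\<integral>x. Z x * et i x \<partial>M) = 0"
    if Z: "Z \<in> borel_measurable (F (i - 1))" "\<And>x. x \<in> space M \<Longrightarrow> \<bar>Z x\<bar> \<le> C" for Z i C
  proof -
    interpret S: sigma_finite_subalgebra M "F (i - 1)" by (rule sfs)
    have ZM[measurable]: "Z \<in> borel_measurable M" using measurable_from_subalg[OF subF Z(1)] .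
    have "(\<integral>x. Z x * et i x \<partial>M) = (\<integral>x. Z x * \<epsilon> i x \<partial>M)"
      by (rule integral_cong_AE) (use AEet in auto)
    also have "\<dots> = (\<integral>x. Z x * real_cond_exp M (F (i - 1)) (\<epsilon> i) x \<partial>M)"
    proof (rule S.real_cond_exp_intg(2)[symmetric])
      show "integrable M (\<lambda>x. Z x * \<epsilon> i x)"
      proof (rule Bochner_Integration.integrable_bound[where f="\<lambda>x. \<bar>C\<bar> * \<epsilon> i x"])
        show "integrable M (\<lambda>x. \<bar>C\<bar> * \<epsilon> i x)" using mds_int[of i] by simp
        show "AE x in M. norm (Z x * \<epsilon> i x) \<le> norm (\<bar>C\<bar> * \<epsilon> i x)"
        proof (intro AE_I2)
          fix x assume x: "x \<in> space M"
          have "\<bar>Z x\<bar> \<le> \<bar>C\<bar>" using Z(2)[OF x] by linarith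
          then show "norm (Z x * \<epsilon> i x) \<le> norm (\<bar>C\<bar> * \<epsilon> i x)" by (simp add: abs_mult mult_right_mono)
        qed
      qed measurable
    qed (use Z(1) in auto)
    also have "\<dots> = (\<integral>x. 0 \<partial>M)"
      by (rule integral_cong_AE) (use mds[of i] in \<open>auto simp: F_def\<close>)
    finally show ?thesis by simp
  qed
  have orth2: "(\<integral>x. Z x * ((et i x)^2 - \<sigma>2) \<partial>M) = 0"
    if Z: "Z \<in> borel_measurable (F (i - 1))" "\<And>x. x \<in> space M \<Longrightarrow> \<bar>Z x\<bar> \<le> C" for Z i C
  proof -
    interpret S: sigma_finite_subalgebra M "F (i - 1)" by (rule sfs)
    have ZM[measurable]: "Z \<in> borel_measurable M" using measurable_from_subalg[OF subF Z(1)] .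
    have intZ: "integrable M Z" using Z(2) by (intro integrable_const_bound[where B=C]) auto
    have intZe: "integrable M (\<lambda>x. Z x * (\<epsilon> i x)^2)"
    proof (rule integrable_const_bound[where B="\<bar>C\<bar> * K^2"])
      show "AE x in M. norm (Z x * (\<epsilon> i x)^2) \<le> \<bar>C\<bar> * K^2"
        using D4
      proof (rule AE_mp, intro AE_I2 impI)
        fix x assume x: "x \<in> space M" and e: "\<forall>t. \<bar>\<epsilon> t x\<bar> \<le> K"
        then have "\<bar>\<epsilon> i x\<bar> \<le> K" by auto
        then have e2: "(\<epsilon> i x)^2 \<le> K^2" using pw_bd[of "\<epsilon> i x" K 2] by simp
        have "\<bar>Z x\<bar> \<le> \<bar>C\<bar>" using Z(2)[OF x] by linarith
        then show "norm (Z x * (\<epsilon> i x)^2) \<le> \<bar>C\<bar> * K^2"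
          using e2 by (simp add: abs_mult mult_mono)
      qed
    qed measurable
    have "(\<integral>x. Z x * ((et i x)^2 - \<sigma>2) \<partial>M) = (\<integral>x. Z x * (\<epsilon> i x)^2 - \<sigma>2 * Z x \<partial>M)"
      by (rule integral_cong_AE) (use AEet in \<open>auto simp: algebra_simps\<close>)
    also have "\<dots> = (\<integral>x. Z x * (\<epsilon> i x)^2 \<partial>M) - \<sigma>2 * (\<integral>x. Z x \<partial>M)"
      using intZ intZe by simp
    also have "(\<integral>x. Z x * (\<epsilon> i x)^2 \<partial>M) = (\<integral>x. Z x * real_cond_exp M (F (i - 1)) (\<lambda>x. (\<epsilon> i x)^2) x \<partial>M)"
      by (rule S.real_cond_exp_intg(2)[symmetric]) (use intZe Z(1) in auto)
    also have "\<dots> = (\<integral>x. \<sigma>2 * Z x \<partial>M)"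
      by (rule integral_cong_AE) (use D3[of i] in \<open>auto simp: F_def\<close>)
    finally show ?thesis by simp
  qed
  define L where "L = Suc u"
  define ap where "ap s j x = kappa_phi \<beta> \<kappa> (\<lambda>_. th (s - L) x) s j" for s j x
  have apm: "ap (Suc n) j \<in> borel_measurable (F (int n - int j))" if j: "j \<le> u" for n j
  proof -
    have "Suc n - L = 0 \<or> int (Suc n - L) \<le> int n - int j" using j unfolding L_def by auto
    then have "th (Suc n - L) \<in> borel_measurable (F (int n - int j))" by (rule thmF)
    then show ?thesis unfolding ap_def by (rule kp_const_meas)
  qed
  have ap0: "ap 0 j x = 0" for j x unfolding ap_def by simp
  have sub_n: "subalgebra M (F (int n - int j))" for n j by (rule subF)
  have mono_n: "n \<le> m \<Longrightarrow> sets (F (int n - int j)) \<subseteq> sets (F (int m - int j))" for n m j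
    by (rule monoF) simp
  have AH1: "AE x in M. \<forall>N. (\<lambda>t. (1/real t) * (\<Sum>s=1..t. trunc N ((ap s j x)^2) * ((et (int s - int j) x)^2 - \<sigma>2))) \<longlonglongrightarrow> 0"
    if j: "j \<le> u" for j
  proof (rule slln_apply[OF prob sub_n mono_n, where KH="K^2 + \<bar>\<sigma>2\<bar>"])
    show "(\<lambda>x. (ap (Suc n) j x)^2) \<in> borel_measurable (F (int n - int j))" for n
      using apm[OF j, of n] by measurable
    show "(\<lambda>x. (ap 0 j x)^2) \<in> borel_measurable (F (int 0 - int j))" by (simp add: ap0)
    show "(\<lambda>x. (et (int n - int j) x)^2 - \<sigma>2) \<in> borel_measurable (F (int n - int j))" for n
      using etm[of "int n - int j"] by measurable
    show "\<bar>(et (int n - int j) x)^2 - \<sigma>2\<bar> \<le> K^2 + \<bar>\<sigma>2\<bar>" for n x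
    proof -
      have "(et (int n - int j) x)^2 \<le> \<bar>K\<bar>^2" using pw_bd[OF etb, of _ _ 2] by simp
      then have "(et (int n - int j) x)^2 \<le> K^2" by simp
      moreover have "0 \<le> (et (int n - int j) x)^2" by simp
      moreover have "0 \<le> K^2" by simp
      ultimately show ?thesis unfolding abs_le_iff using abs_ge_self[of \<sigma>2] abs_ge_minus_self[of \<sigma>2] by linarith
    qed
    show "(\<integral>x. Z x * ((et (int (Suc n) - int j) x)^2 - \<sigma>2) \<partial>M) = 0"
      if "Z \<in> borel_measurable (F (int n - int j))" "\<And>x. x \<in> space M \<Longrightarrow> \<bar>Z x\<bar> \<le> C" for n Z C
    proof (rule orth2)
      have "int (Suc n) - int j - 1 = int n - int j" by simp
      then show "Z \<in> borel_measurable (F (int (Suc n) - int j - 1))" using that(1) by simp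
    qed (use that in auto)
  qed
  have AH2: "AE x in M. \<forall>N. (\<lambda>t. (1/real t) * (\<Sum>s=1..t. trunc N (ap s j x * ap s k x * et (int s - int k) x) * et (int s - int j) x)) \<longlonglongrightarrow> 0"
    if jk: "j < k" "k \<le> u" for j k
  proof (rule slln_apply[OF prob sub_n mono_n, where KH="\<bar>K\<bar>"])
    show "(\<lambda>x. ap (Suc n) j x * ap (Suc n) k x * et (int (Suc n) - int k) x) \<in> borel_measurable (F (int n - int j))" for n
    proof -
      have [measurable]: "ap (Suc n) j \<in> borel_measurable (F (int n - int j))" using apm jk by simp
      have [measurable]: "ap (Suc n) k \<in> borel_measurable (F (int n - int j))"
        using measurable_from_subalg[OF subFF apm[of k n]] jk by simp
      have [measurable]: "et (int (Suc n) - int k) \<in> borel_measurable (F (int n - int j))"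
        using jk by (intro etmF) simp
      show ?thesis by measurable
    qed
    show "(\<lambda>x. ap 0 j x * ap 0 k x * et (int 0 - int k) x) \<in> borel_measurable (F (int 0 - int j))" by (simp add: ap0)
    show "et (int n - int j) \<in> borel_measurable (F (int n - int j))" for n by (rule etm)
    show "\<bar>et (int n - int j) x\<bar> \<le> \<bar>K\<bar>" for n x by (rule etb)
    show "(\<integral>x. Z x * et (int (Suc n) - int j) x \<partial>M) = 0"
      if "Z \<in> borel_measurable (F (int n - int j))" "\<And>x. x \<in> space M \<Longrightarrow> \<bar>Z x\<bar> \<le> C" for n Z C
    proof (rule orth1)
      have "int (Suc n) - int j - 1 = int n - int j" by simp
      then show "Z \<in> borel_measurable (F (int (Suc n) - int j - 1))" using that(1) by simp
    qed (use that in auto)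
  qed
  have AH1all: "AE x in M. \<forall>j. j \<le> u \<longrightarrow> (\<forall>N. (\<lambda>t. (1/real t) * (\<Sum>s=1..t. trunc N ((ap s j x)^2) * ((et (int s - int j) x)^2 - \<sigma>2))) \<longlonglongrightarrow> 0)"
    unfolding AE_all_countable by (intro allI AE_impI AH1)
  have AH2all: "AE x in M. \<forall>j k. j < k \<longrightarrow> k \<le> u \<longrightarrow> (\<forall>N. (\<lambda>t. (1/real t) * (\<Sum>s=1..t. trunc N (ap s j x * ap s k x * et (int s - int k) x) * et (int s - int j) x)) \<longlonglongrightarrow> 0)"
    unfolding AE_all_countable by (intro allI AE_impI AH2)
  have D1AE: "AE x in M. 0 < (y 1 x)^2"
  proof -
    have [measurable]: "y 1 \<in> borel_measurable M" by (rule y_meas)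
    have "{x \<in> space M. 0 < (y 1 x)^2} \<in> sets M" by measurable
    then show ?thesis using D1 prob_Collect_eq_1 by simp
  qed
  show ?thesis
    using D2_ma D1AE D4 stab AEet AH1all AH2all
  proof eventually_elim
    case (elim x)
    define W where "W = K * (\<Sum>s. \<bar>\<kappa> s\<bar>)"
    define Yx where "Yx n = y (int n) x" for n
    have Yb: "\<bar>Yx n\<bar> \<le> W" for n
      unfolding Yx_def W_def
      by (rule y_bound[of \<kappa> "\<lambda>s. \<epsilon> (int n - int s) x"]) (use elim D2_abs in auto)
    have Y1: "Yx 1 \<noteq> 0" using elim unfolding Yx_def by auto
    have thb: "\<bar>rls_theta \<beta> Yx n\<bar> \<le> Kst x" if "n \<ge> Suc (kst x)" for n
    proof -
      have "n = (n - kst x) + kst x" "n - kst x \<ge> 1" using that by auto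
      then show ?thesis using elim unfolding Yx_def by metis
    qed
    have dth: "(\<lambda>n. rls_theta \<beta> Yx (Suc n) - rls_theta \<beta> Yx n) \<longlonglongrightarrow> 0"
      by (rule dtheta_null[OF Yb Y1 thb _ \<beta>]) (use elim in auto)
    have thb1: "\<bar>rls_theta \<beta> Yx n\<bar> \<le> 1" if "n \<ge> Suc (kst x)" for n
      using thb[OF that] elim by auto
    have etx: "et i x = \<epsilon> i x" for i using elim by auto
    show ?case
    proof (rule final_det[OF \<beta> dth thb1, where E="\<lambda>i. \<epsilon> i x" and K=K, unfolded Yx_def])
      show "\<bar>\<epsilon> i x\<bar> \<le> K" for i using elim by auto
      show "(\<lambda>t. (1/real t) * (\<Sum>s=1..t. trunc N ((kappa_phi \<beta> \<kappa> (\<lambda>_. rls_theta \<beta> (\<lambda>n. y (int n) x) (s - Suc u)) s j)^2)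
                 * ((\<epsilon> (int s - int j) x)^2 - \<sigma>2))) \<longlonglongrightarrow> 0" if "j \<le> u" for j N
        using elim that unfolding ap_def th_def L_def etx by blast
      show "(\<lambda>t. (1/real t) * (\<Sum>s=1..t.
                 trunc N (kappa_phi \<beta> \<kappa> (\<lambda>_. rls_theta \<beta> (\<lambda>n. y (int n) x) (s - Suc u)) s j * kappa_phi \<beta> \<kappa> (\<lambda>_. rls_theta \<beta> (\<lambda>n. y (int n) x) (s - Suc u)) s k
                   * \<epsilon> (int s - int k) x) * \<epsilon> (int s - int j) x)) \<longlonglongrightarrow> 0" if "j < k" "k \<le> u" for j k N
        using elim that unfolding ap_def th_def L_def etx by blast
    qed
  qed
qed


end
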